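(* Let $q$ be a prime power, let $F_1\subsetneq F_0\subseteq\mathbb{F}_q^n$ be linear codes, and let $G_E\in\mathbb{F}_q^{e\times n}$ have row space $E$ with $F_0\cap E=\{\underline{0}\}$. In the QSS scheme given by $\mathrm{ECSS}(F_0,F_1,G_E)$, when the combiner has access to none of the extension qudits, the secret can be recovered from every choice of $\tau$ qudits out of the $n$ original qudits (i.e. every $J\subseteq[n]$ with $|J|=\tau$ is authorized) if and only if $\tau\geq\tau_0$, where $$\tau_0=n-\min\{\mathrm{wt}((F_0+E)\setminus(F_1+E)),\ \mathrm{wt}(F_1^\perp\setminus F_0^\perp)\}+1.$$
   Context: For linear codes $L_1\subsetneq L_0\subseteq\mathbb{F}_q^n$, $\mathrm{wt}(L_0\setminus L_1)=\min\{\mathrm{wt}(\underline{c}):\underline{c}\in L_0,\ \underline{c}\notin L_1\}$ (Hamming weight); $L^\perp$ is the dual code. Let $F_0,F_1$ have dimensions $f_0,f_1$, and let $G_{F_0}=\begin{bmatrix}G_{F_0/F_1}\\ G_{F_1}\end{bmatrix}$ be a generator matrix of $F_0$ with $G_{F_1}$ generating $F_1$ and $G_{F_0/F_1}$ generating a complement of $F_1$ in $F_0$. The extended CSS code $\mathrm{ECSS}(F_0,F_1,G_E)$ is the CSS code of $C_0$ over $C_1$ where $C_0,C_1\subseteq\mathbb{F}_q^{n+e}$ are generated by $\begin{bmatrix}G_{F_0}&0\\ G_E&I_e\end{bmatrix}$ and $\begin{bmatrix}G_{F_1}&0\\ G_E&I_e\end{bmatrix}$; its encoding maps (up to normalization,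 extended linearly) $|\underline{s}\rangle$, $\underline{s}\in\mathbb{F}_q^{f_0-f_1}$, to $\sum_{\underline{r}_1\in\mathbb{F}_q^{f_1},\underline{r}_2\in\mathbb{F}_q^{e}}|[\,G_{F_0/F_1}^T\ G_{F_1}^T\ G_E^T\,](\underline{s};\underline{r}_1;\underline{r}_2)\rangle|\underline{r}_2\rangle$. The first $n$ qudits are the original qudits and the last $e$ the extension qudits; qudit $j$ is given to party $j\in[n+e]$. A set of parties is authorized if the secret can be recovered from their qudits. *)

theory Defs
  imports Complex_Main
begin

(* Vectors over a finite field 'a are functions nat => 'a; a vector of length m
   (or a basis label of qudits in a set S) is a function vanishing outside S.
   Coordinates/qudits are numbered 0,1,... (0-based). *)

definition lab :: "nat set \<Rightarrow> (nat \<Rightarrow> 'a::zero) set" where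
  "lab S = {x. \<forall>i. i \<notin> S \<longrightarrow> x i = 0}"

abbreviation Vn :: "nat \<Rightarrow> (nat \<Rightarrow> 'a::zero) set" where
  "Vn m \<equiv> lab {0..<m}"

definition zerov :: "nat \<Rightarrow> 'a::zero" where "zerov = (\<lambda>_. 0)"

definition vadd :: "(nat \<Rightarrow> 'a::plus) \<Rightarrow> (nat \<Rightarrow> 'a) \<Rightarrow> nat \<Rightarrow> 'a" where
  "vadd x y = (\<lambda>i. x i + y i)"

definition linear_code :: "nat \<Rightarrow> (nat \<Rightarrow> 'a::field) set \<Rightarrow> bool" where
  "linear_code n L \<longleftrightarrow> L \<subseteq> Vn n \<and> zerov \<in> L \<and>
     (\<forall>x\<in>L. \<forall>y\<in>L. vadd x y \<in> L) \<and> (\<forall>c x. x \<in> L \<longrightarrow> (\<lambda>i. c * x i) \<in> L)"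

(* linear combination of the first m rows of matrix G (G j i = entry in row j, column i) *)
definition comb :: "(nat \<Rightarrow> nat \<Rightarrow> 'a::field) \<Rightarrow> nat \<Rightarrow> (nat \<Rightarrow> 'a) \<Rightarrow> nat \<Rightarrow> 'a" where
  "comb G m r = (\<lambda>i. \<Sum>j<m. r j * G j i)"

definition rowspace :: "(nat \<Rightarrow> nat \<Rightarrow> 'a::field) \<Rightarrow> nat \<Rightarrow> (nat \<Rightarrow> 'a) set" where
  "rowspace G m = {comb G m r | r. True}"

definition is_matrix :: "(nat \<Rightarrow> nat \<Rightarrow> 'a::zero) \<Rightarrow> nat \<Rightarrow> nat \<Rightarrow> bool" where
  "is_matrix G m n \<longleftrightarrow> (\<forall>j i. (j \<ge> m \<or> i \<ge> n) \<longrightarrow> G j i = 0)"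

definition rows_independent :: "(nat \<Rightarrow> nat \<Rightarrow> 'a::field) \<Rightarrow> nat \<Rightarrow> bool" where
  "rows_independent G m \<longleftrightarrow> (\<forall>r. comb G m r = zerov \<longrightarrow> (\<forall>j<m. r j = 0))"

definition generator_matrix :: "(nat \<Rightarrow> nat \<Rightarrow> 'a::field) \<Rightarrow> nat \<Rightarrow> nat \<Rightarrow> (nat \<Rightarrow> 'a) set \<Rightarrow> bool" where
  "generator_matrix G m n L \<longleftrightarrow> is_matrix G m n \<and> rows_independent G m \<and> rowspace G m = L"

definition stack :: "(nat \<Rightarrow> nat \<Rightarrow> 'a::zero) \<Rightarrow> nat \<Rightarrow> (nat \<Rightarrow> nat \<Rightarrow> 'a) \<Rightarrow> nat \<Rightarrow> nat \<Rightarrow> 'a" where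
  "stack A k B = (\<lambda>j. if j < k then A j else B (j - k))"

definition code_sum :: "(nat \<Rightarrow> 'a::plus) set \<Rightarrow> (nat \<Rightarrow> 'a) set \<Rightarrow> (nat \<Rightarrow> 'a) set" where
  "code_sum L M = {vadd x y | x y. x \<in> L \<and> y \<in> M}"

definition dual :: "nat \<Rightarrow> (nat \<Rightarrow> 'a::field) set \<Rightarrow> (nat \<Rightarrow> 'a) set" where
  "dual n L = {y \<in> Vn n. \<forall>x\<in>L. (\<Sum>i<n. x i * y i) = 0}"

definition wt :: "nat \<Rightarrow> (nat \<Rightarrow> 'a::zero) \<Rightarrow> nat" where
  "wt n x = card {i. i < n \<and> x i \<noteq> 0}"

definition wt_diff :: "nat \<Rightarrow> (nat \<Rightarrow> 'a::zero) set \<Rightarrow> (nat \<Rightarrow> 'a) set \<Rightarrow> nat" where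
  "wt_diff n L0 L1 = Min (wt n ` (L0 - L1))"

(* ---------------- the quantum secret sharing scheme ECSS(F0,F1,G_E) ----------------
   Parameters: n original qudits, e extension qudits, k = f0 - f1 secret qudits,
   G01 = G_{F0/F1} (k x n), G1 = G_{F1} (f1 x n), GE = G_E (e x n).
   Basis of m qudits: labels x in Vn m; a state is a function from labels to complex. *)

definition ext_vec :: "nat \<Rightarrow> (nat \<Rightarrow> 'a::zero) \<Rightarrow> (nat \<Rightarrow> 'a) \<Rightarrow> nat \<Rightarrow> 'a" where
  "ext_vec n c r2 = (\<lambda>i. if i < n then c i else r2 (i - n))"

(* amplitude of the normalized encoded state of the secret basis state |s> at basis label x *)
definition enc_amp :: "nat \<Rightarrow> nat \<Rightarrow> nat \<Rightarrow> nat \<Rightarrow> (nat \<Rightarrow> nat \<Rightarrow> 'a::{field,finite}) \<Rightarrow>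
    (nat \<Rightarrow> nat \<Rightarrow> 'a) \<Rightarrow> (nat \<Rightarrow> nat \<Rightarrow> 'a) \<Rightarrow> (nat \<Rightarrow> 'a) \<Rightarrow> (nat \<Rightarrow> 'a) \<Rightarrow> complex" where
  "enc_amp n e k f1 G01 G1 GE s x =
     of_nat (card {(r1, r2). r1 \<in> Vn f1 \<and> r2 \<in> Vn e \<and>
        x = ext_vec n (vadd (vadd (comb G01 k s) (comb G1 f1 r1)) (comb GE e r2)) r2})
     / complex_of_real (sqrt (real (card (UNIV :: 'a set) ^ (f1 + e))))"

definition encode :: "nat \<Rightarrow> nat \<Rightarrow> nat \<Rightarrow> nat \<Rightarrow> (nat \<Rightarrow> nat \<Rightarrow> 'a::{field,finite}) \<Rightarrow>
    (nat \<Rightarrow> nat \<Rightarrow> 'a) \<Rightarrow> (nat \<Rightarrow> nat \<Rightarrow> 'a) \<Rightarrow> ((nat \<Rightarrow> 'a) \<Rightarrow> complex) \<Rightarrow> (nat \<Rightarrow> 'a) \<Rightarrow> complex" where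
  "encode n e k f1 G01 G1 GE phi x = (\<Sum>s\<in>Vn k. phi s * enc_amp n e k f1 G01 G1 GE s x)"

(* reduced density matrix on the qudits A of a pure state psi on the qudits {0..<N} *)
definition reduced :: "nat \<Rightarrow> nat set \<Rightarrow> ((nat \<Rightarrow> 'a::{zero,plus}) \<Rightarrow> complex) \<Rightarrow>
    (nat \<Rightarrow> 'a) \<Rightarrow> (nat \<Rightarrow> 'a) \<Rightarrow> complex" where
  "reduced N A psi a a' = (\<Sum>b\<in>lab ({0..<N} - A). psi (vadd a b) * cnj (psi (vadd a' b)))"

(* a quantum channel (Kraus list) from the qudits A to the secret space Vn k is trace preserving *)
definition trace_preserving :: "nat set \<Rightarrow> nat \<Rightarrow> ((nat \<Rightarrow> 'a::zero) \<Rightarrow> (nat \<Rightarrow> 'a) \<Rightarrow> complex) list \<Rightarrow> bool" where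
  "trace_preserving A k Ks \<longleftrightarrow> (\<forall>a\<in>lab A. \<forall>a'\<in>lab A.
     (\<Sum>K\<leftarrow>Ks. \<Sum>t\<in>Vn k. cnj (K t a) * K t a') = (if a = a' then 1 else 0))"

definition apply_channel :: "nat set \<Rightarrow> ((nat \<Rightarrow> 'a::zero) \<Rightarrow> (nat \<Rightarrow> 'a) \<Rightarrow> complex) list \<Rightarrow>
    ((nat \<Rightarrow> 'a) \<Rightarrow> (nat \<Rightarrow> 'a) \<Rightarrow> complex) \<Rightarrow> (nat \<Rightarrow> 'a) \<Rightarrow> (nat \<Rightarrow> 'a) \<Rightarrow> complex" where
  "apply_channel A Ks rho t t' =
     (\<Sum>K\<leftarrow>Ks. \<Sum>a\<in>lab A. \<Sum>a'\<in>lab A. K t a * rho a a' * cnj (K t' a'))"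

definition authorized :: "nat \<Rightarrow> nat \<Rightarrow> nat \<Rightarrow> nat \<Rightarrow> (nat \<Rightarrow> nat \<Rightarrow> 'a::{field,finite}) \<Rightarrow>
    (nat \<Rightarrow> nat \<Rightarrow> 'a) \<Rightarrow> (nat \<Rightarrow> nat \<Rightarrow> 'a) \<Rightarrow> nat set \<Rightarrow> bool" where
  "authorized n e k f1 G01 G1 GE A \<longleftrightarrow>
     (\<exists>Ks. trace_preserving A k Ks \<and>
        (\<forall>phi. \<forall>t\<in>Vn k. \<forall>t'\<in>Vn k.
           apply_channel A Ks (reduced (n + e) A (encode n e k f1 G01 G1 GE phi)) t t'
             = phi t * cnj (phi t')))"

end

theory Submission
  imports Defs "HOL-Library.Function_Algebras" "HOL-Library.FuncSet"
begin

lemma vadd_eq: "vadd x y = x + y"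
  by (simp add: vadd_def fun_eq_iff)

lemma zerov_eq: "zerov = 0"
  by (simp add: zerov_def fun_eq_iff)

lemma lab_iff: "x \<in> lab S \<longleftrightarrow> (\<forall>i. i \<notin> S \<longrightarrow> x i = 0)"
  by (simp add: lab_def)

lemma lab_restrict_bij:
  "bij_betw (\<lambda>x. restrict x S) (lab S) (PiE S (\<lambda>_. (UNIV::'a::zero set)))"
proof (rule bij_betwI[where g = "\<lambda>f i. if i \<in> S then f i else 0"])
  show "(\<lambda>x. restrict x S) \<in> lab S \<rightarrow> PiE S (\<lambda>_. (UNIV::'a set))" by auto
  show "(\<lambda>f i. if i \<in> S then f i else 0) \<in> PiE S (\<lambda>_. (UNIV::'a set)) \<rightarrow> lab S"
    by (auto simp: lab_def)
  show "\<And>x. x \<in> lab S \<Longrightarrow> (\<lambda>i. if i \<in> S then restrict x S i else 0) = x"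
    by (auto simp: lab_def fun_eq_iff)
  show "\<And>y. y \<in> PiE S (\<lambda>_. (UNIV::'a set)) \<Longrightarrow> restrict (\<lambda>i. if i \<in> S then y i else 0) S = y"
    by (auto simp: fun_eq_iff PiE_def extensional_def)
qed

lemma finite_lab: "finite S \<Longrightarrow> finite (lab S :: (nat \<Rightarrow> 'a::{zero,finite}) set)"
proof -
  assume "finite S"
  then have "finite (PiE S (\<lambda>_. UNIV::'a set))" by (intro finite_PiE) auto
  moreover have "bij_betw (\<lambda>x. restrict x S) (lab S :: (nat \<Rightarrow> 'a) set) (PiE S (\<lambda>_. UNIV::'a set))"
    by (rule lab_restrict_bij)
  ultimately show ?thesis using bij_betw_finite by blast
qed

lemma card_lab: "finite S \<Longrightarrow> card (lab S :: (nat \<Rightarrow> 'a::{zero,finite}) set) = card (UNIV::'a set) ^ card S"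
proof -
  assume "finite S"
  have "bij_betw (\<lambda>x. restrict x S) (lab S :: (nat \<Rightarrow> 'a) set) (PiE S (\<lambda>_. UNIV::'a set))"
    by (rule lab_restrict_bij)
  then have "card (lab S :: (nat \<Rightarrow> 'a) set) = card (PiE S (\<lambda>_. UNIV::'a set))" by (rule bij_betw_same_card)
  then show ?thesis using \<open>finite S\<close> by (simp add: card_PiE)
qed

lemma card_Vn: "card (Vn m :: (nat \<Rightarrow> 'a::{zero,finite}) set) = card (UNIV::'a set) ^ m"
  by (simp add: card_lab)

lemma lab_add: "(x::nat\<Rightarrow>'a::field) \<in> lab S \<Longrightarrow> y \<in> lab S \<Longrightarrow> x + y \<in> lab S"
  by (simp add: lab_def)
lemma lab_diff: "(x::nat\<Rightarrow>'a::field) \<in> lab S \<Longrightarrow> y \<in> lab S \<Longrightarrow> x - y \<in> lab (S::nat set)"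
  by (simp add: lab_def)
lemma lab_uminus: "(x::nat\<Rightarrow>'a::field) \<in> lab S \<Longrightarrow> - x \<in> lab (S::nat set)"
  by (simp add: lab_def)
lemma lab_zero: "(0::nat\<Rightarrow>'a::field) \<in> lab S"
  by (simp add: lab_def)
lemma lab_mono: "x \<in> lab S \<Longrightarrow> S \<subseteq> T \<Longrightarrow> x \<in> lab T"
  by (auto simp: lab_def)

lemma comb_add: "comb G m (r + r') = comb G m r + comb G m r'"
  by (simp add: comb_def fun_eq_iff sum.distrib distrib_right)
lemma comb_uminus: "comb G m (- r) = - comb G m r"
  by (simp add: comb_def fun_eq_iff sum_negf)
lemma comb_diff: "comb G m (r - r') = comb G m r - comb G m r'"
  by (simp add: comb_def fun_eq_iff sum_subtractf left_diff_distrib)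
lemma comb_zero: "comb G m 0 = 0"
  by (simp add: comb_def fun_eq_iff)
lemma comb_restrict: "comb G m (\<lambda>j. if j < m then r j else 0) = comb G m r"
  by (simp add: comb_def fun_eq_iff)
lemma restrict_Vn: "(\<lambda>j. if j < m then r j else 0) \<in> Vn m"
  by (simp add: lab_def)
lemma comb_Vn: "is_matrix G m n \<Longrightarrow> comb G m r \<in> Vn n"
  by (simp add: lab_def comb_def is_matrix_def)

lemma rowspace_Vn: "rowspace G m = comb G m ` Vn m"
proof -
  have "comb G m r \<in> comb G m ` Vn m" for r
    using comb_restrict[of G m r] restrict_Vn[of m r] by (metis image_eqI)
  then show ?thesis by (auto simp: rowspace_def)
qed

lemma comb_stack: "comb (stack A k B) (k + f) r = comb A k r + comb B f (\<lambda>j. r (j + k))"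
proof -
  have "(\<Sum>j<k + f. r j * stack A k B j i) = (\<Sum>j<k. r j * A j i) + (\<Sum>j<f. r (j + k) * B j i)" for i
  proof -
    have "(\<Sum>j<k + f. r j * stack A k B j i) = (\<Sum>j<k. r j * stack A k B j i) + (\<Sum>j\<in>{k..<k+f}. r j * stack A k B j i)"
      using sum.atLeastLessThan_concat[of 0 k "k+f" "\<lambda>j. r j * stack A k B j i"] by (simp add: atLeast0LessThan)
    also have "(\<Sum>j<k. r j * stack A k B j i) = (\<Sum>j<k. r j * A j i)"
      by (simp add: stack_def)
    also have "(\<Sum>j\<in>{k..<k+f}. r j * stack A k B j i) = (\<Sum>j<f. r (j + k) * B j i)"
    proof -
      have "(\<Sum>j\<in>{k..<k+f}. r j * stack A k B j i) = (\<Sum>j\<in>{0..<f}. r (j + k) * stack A k B (j + k) i)"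
        using sum.shift_bounds_nat_ivl[of "\<lambda>j. r j * stack A k B j i" 0 k f] by (simp add: add.commute)
      also have "\<dots> = (\<Sum>j<f. r (j + k) * B j i)"
        by (simp add: stack_def atLeast0LessThan)
      finally show ?thesis .
    qed
    finally show ?thesis .
  qed
  then show ?thesis by (simp add: comb_def fun_eq_iff)
qed

lemma comb_stack2: "comb A k s + comb B f r1 = comb (stack A k B) (k + f) (\<lambda>j. if j < k then s j else r1 (j - k))"
  by (simp add: comb_stack) (simp add: comb_def)



definition subsp :: "(nat \<Rightarrow> 'a::field) set \<Rightarrow> bool" where
  "subsp U \<longleftrightarrow> 0 \<in> U \<and> (\<forall>x\<in>U. \<forall>y\<in>U. x + y \<in> U) \<and> (\<forall>c x. x \<in> U \<longrightarrow> (\<lambda>i. c * x i) \<in> U)"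

lemma subsp_zero: "subsp U \<Longrightarrow> 0 \<in> U" by (simp add: subsp_def)
lemma subsp_add: "subsp U \<Longrightarrow> x \<in> U \<Longrightarrow> y \<in> U \<Longrightarrow> x + y \<in> U" by (simp add: subsp_def)
lemma subsp_scale: "subsp U \<Longrightarrow> x \<in> U \<Longrightarrow> (\<lambda>i. c * x i) \<in> U" by (simp add: subsp_def)
lemma subsp_uminus: "subsp U \<Longrightarrow> x \<in> U \<Longrightarrow> - x \<in> U"
proof -
  assume "subsp U" "x \<in> U"
  then have "(\<lambda>i. (-1) * x i) \<in> U" by (rule subsp_scale)
  moreover have "(\<lambda>i. (-1) * x i) = - x" by (simp add: fun_eq_iff)
  ultimately show ?thesis by simp
qed
lemma subsp_diff: "subsp U \<Longrightarrow> x \<in> U \<Longrightarrow> y \<in> U \<Longrightarrow> x - y \<in> U"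
  using subsp_add[of U x "- y"] subsp_uminus[of U y] by simp

lemma linear_code_subsp: "linear_code n L \<Longrightarrow> subsp L"
  by (simp add: linear_code_def subsp_def vadd_eq zerov_eq)

lemma separate_aux:
  fixes A :: "nat set"
  assumes "finite A"
  shows "subsp (U :: (nat \<Rightarrow> 'a::field) set) \<Longrightarrow> U \<subseteq> lab A \<Longrightarrow> w \<in> lab A \<Longrightarrow> w \<notin> U \<Longrightarrow>
    \<exists>y\<in>lab A. (\<forall>u\<in>U. (\<Sum>i\<in>A. y i * u i) = 0) \<and> (\<Sum>i\<in>A. y i * w i) \<noteq> 0"
  using assms
proof (induction A arbitrary: U w rule: finite_induct)
  case empty
  then have "w = 0" by (simp add: lab_def fun_eq_iff)
  then show ?case using empty subsp_zero by blast
next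
  case (insert i A)
  show ?case
  proof (cases "\<exists>u0\<in>U. u0 i \<noteq> 0")
    case True
    then obtain u0 where u0: "u0 \<in> U" "u0 i \<noteq> 0" by blast
    define \<pi> where "\<pi> x = x - (\<lambda>j. (x i / u0 i) * u0 j)" for x :: "nat \<Rightarrow> 'a"
    have \<pi>i: "\<pi> x i = 0" for x using u0 by (simp add: \<pi>_def)
    have \<pi>lab: "x \<in> lab (insert i A) \<Longrightarrow> \<pi> x \<in> lab A" for x
    proof -
      assume x: "x \<in> lab (insert i A)"
      have "\<pi> x j = 0" if "j \<notin> A" for j
      proof (cases "j = i")
        case True then show ?thesis using \<pi>i by simp
      next
        case False
        then have "x j = 0" "u0 j = 0" using x u0(1) insert.prems(2) that by (auto simp: lab_def)
        then show ?thesis by (simp add: \<pi>_def)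
      qed
      then show ?thesis by (simp add: lab_def)
    qed
    have \<pi>U: "x \<in> U \<Longrightarrow> \<pi> x \<in> U" for x
      unfolding \<pi>_def by (rule subsp_diff[OF insert.prems(1)], assumption, rule subsp_scale[OF insert.prems(1) u0(1)])
    define U' where "U' = \<pi> ` U"
    have sU': "subsp U'"
    proof -
      have "\<pi> 0 = 0" by (simp add: \<pi>_def fun_eq_iff)
      then have "0 \<in> U'" unfolding U'_def
        using subsp_zero[OF insert.prems(1)] by (metis image_eqI)
      moreover have "x + y \<in> U'" if xy: "x \<in> U'" "y \<in> U'" for x y
      proof -
        obtain a b where ab: "a \<in> U" "b \<in> U" "x = \<pi> a" "y = \<pi> b" using xy U'_def by auto
        have "x + y = \<pi> (a + b)" using ab by (simp add: \<pi>_def fun_eq_iff add_divide_distrib distrib_right)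
        then show ?thesis using ab subsp_add[OF insert.prems(1)] U'_def by auto
      qed
      moreover have "(\<lambda>j. c * x j) \<in> U'" if xU: "x \<in> U'" for x c
      proof -
        obtain a where ab: "a \<in> U" "x = \<pi> a" using xU U'_def by auto
        have "(\<lambda>j. c * x j) = \<pi> (\<lambda>j. c * a j)" unfolding ab(2) using u0(2) by (simp add: \<pi>_def fun_eq_iff field_simps)
        then show ?thesis using ab subsp_scale[OF insert.prems(1)] U'_def by auto
      qed
      ultimately show ?thesis by (simp add: subsp_def)
    qed
    have U'A: "U' \<subseteq> lab A" using \<pi>lab insert.prems(2) U'_def by auto
    have wA: "\<pi> w \<in> lab A" using \<pi>lab insert.prems(3) by auto
    have wU: "\<pi> w \<notin> U'"
    proof
      assume "\<pi> w \<in> U'"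
      then obtain u where u: "u \<in> U" "\<pi> w = \<pi> u" using U'_def by auto
      have wj: "w j = u j + ((w i - u i) / u0 i) * u0 j" for j
      proof -
        have "w j - (w i / u0 i) * u0 j = u j - (u i / u0 i) * u0 j"
          using fun_cong[OF u(2), of j] by (simp add: \<pi>_def)
        then show ?thesis by (simp add: diff_divide_distrib left_diff_distrib algebra_simps)
      qed
      have "w = u + (\<lambda>j. ((w i - u i) / u0 i) * u0 j)"
      proof (rule ext)
        fix j show "w j = (u + (\<lambda>j. ((w i - u i) / u0 i) * u0 j)) j"
          by (simp only: plus_fun_apply) (rule wj)
      qed
      moreover have "u + (\<lambda>j. ((w i - u i) / u0 i) * u0 j) \<in> U"
        by (intro subsp_add[OF insert.prems(1)] subsp_scale[OF insert.prems(1)] u(1) u0(1))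
      ultimately show False using insert.prems(4) by simp
    qed
    obtain y where y: "y \<in> lab A" "\<forall>u\<in>U'. (\<Sum>i\<in>A. y i * u i) = 0" "(\<Sum>i\<in>A. y i * \<pi> w i) \<noteq> 0"
      using insert.IH[OF sU' U'A wA wU] by blast
    define lam where "lam = - (\<Sum>j\<in>A. y j * u0 j) / u0 i"
    define y' where "y' = y(i := lam)"
    have key: "(\<Sum>j\<in>insert i A. y' j * x j) = (\<Sum>j\<in>A. y j * \<pi> x j)" for x
    proof -
      have "(\<Sum>j\<in>insert i A. y' j * x j) = lam * x i + (\<Sum>j\<in>A. y j * x j)"
        using insert.hyps by (simp add: y'_def) (rule sum.cong, auto)
      moreover have "(\<Sum>j\<in>A. y j * \<pi> x j) = (\<Sum>j\<in>A. y j * x j) - (x i / u0 i) * (\<Sum>j\<in>A. y j * u0 j)"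
        by (simp add: \<pi>_def algebra_simps sum_subtractf sum_distrib_left)
      moreover have "(x i / u0 i) * (\<Sum>j\<in>A. y j * u0 j) = - lam * x i"
        using u0 by (simp add: lam_def field_simps)
      ultimately show ?thesis by simp
    qed
    have "y' \<in> lab (insert i A)" using y(1) by (auto simp: lab_def y'_def)
    moreover have "\<forall>u\<in>U. (\<Sum>j\<in>insert i A. y' j * u j) = 0"
      using key y(2) U'_def by auto
    moreover have "(\<Sum>j\<in>insert i A. y' j * w j) \<noteq> 0" using key y(3) by simp
    ultimately show ?thesis by blast
  next
    case False
    show ?thesis
    proof (cases "w i = 0")
      case True
      have UA: "U \<subseteq> lab A"
      proof
        fix x assume x: "x \<in> U"
        have "x j = 0" if "j \<notin> A" for j
          using x False insert.prems(2) that by (cases "j = i") (auto simp: lab_def)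
        then show "x \<in> lab A" by (simp add: lab_def)
      qed
      have "w j = 0" if "j \<notin> A" for j
        using True insert.prems(3) that by (cases "j = i") (auto simp: lab_def)
      then have wA: "w \<in> lab A" by (simp add: lab_def)
      obtain y where y: "y \<in> lab A" "\<forall>u\<in>U. (\<Sum>i\<in>A. y i * u i) = 0" "(\<Sum>i\<in>A. y i * w i) \<noteq> 0"
        using insert.IH[OF insert.prems(1) UA wA insert.prems(4)] by blast
      have yi: "y i = 0" using y(1) insert.hyps by (simp add: lab_def)
      have e: "(\<Sum>j\<in>insert i A. y j * x j) = (\<Sum>j\<in>A. y j * x j)" for x
        using insert.hyps yi by simp
      have yl: "y \<in> lab (insert i A)" by (rule lab_mono[OF y(1)]) auto
      show ?thesis
        by (rule bexI[OF _ yl]) (simp only: e, use y(2,3) in auto)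
    next
      case wi: False
      define y where "y = (\<lambda>j. if j = i then (1::'a) else 0)"
      have "(\<Sum>j\<in>insert i A. y j * x j) = x i" for x
      proof -
        have "(\<Sum>j\<in>A. y j * x j) = 0" using insert.hyps(2) by (intro sum.neutral) (auto simp: y_def)
        then show ?thesis using insert.hyps by (simp add: y_def)
      qed
      note e = this
      have yl: "y \<in> lab (insert i A)" by (simp add: y_def lab_def)
      show ?thesis
        by (rule bexI[OF _ yl]) (simp only: e, use False wi in auto)
    qed
  qed
qed



definition gauth :: "nat \<Rightarrow> nat set \<Rightarrow> nat \<Rightarrow> ((nat \<Rightarrow> 'a::{field,finite}) \<Rightarrow> (nat \<Rightarrow> 'a) \<Rightarrow> complex) \<Rightarrow> bool" where
  "gauth N J k amp \<longleftrightarrow> (\<exists>Ks. trace_preserving J k Ks \<and>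
     (\<forall>phi. \<forall>t\<in>Vn k. \<forall>t'\<in>Vn k.
        apply_channel J Ks (reduced N J (\<lambda>x. \<Sum>s\<in>Vn k. phi s * amp s x)) t t' = phi t * cnj (phi t')))"

lemma finite_Vn: "finite (Vn m :: (nat \<Rightarrow> 'a::{zero,finite}) set)"
  by (simp add: finite_lab)

lemma sum_two_delta:
  fixes amp :: "(nat \<Rightarrow> 'a::{field,finite}) \<Rightarrow> complex"
  assumes "s \<in> Vn k" "s' \<in> Vn k" "s \<noteq> s'"
  shows "(\<Sum>v\<in>Vn k. (if v = s then \<alpha> else if v = s' then \<beta> else 0) * amp v) = \<alpha> * amp s + \<beta> * amp s'"
proof -
  have "(\<Sum>v\<in>Vn k. (if v = s then \<alpha> else if v = s' then \<beta> else 0) * amp v)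
      = (\<Sum>v\<in>Vn k. (if v = s then \<alpha> * amp s else 0) + (if v = s' then \<beta> * amp s' else 0))"
    using assms(3) by (intro sum.cong) auto
  also have "\<dots> = \<alpha> * amp s + \<beta> * amp s'"
    using assms sum.delta[OF finite_Vn[where m=k and 'a='a], of s "\<lambda>_. \<alpha> * amp s"]
      sum.delta[OF finite_Vn[where m=k and 'a='a], of s' "\<lambda>_. \<beta> * amp s'"] by (simp add: sum.distrib)
  finally show ?thesis .
qed

lemma sum_one_delta:
  fixes amp :: "(nat \<Rightarrow> 'a::{field,finite}) \<Rightarrow> complex"
  assumes "s \<in> Vn k"
  shows "(\<Sum>v\<in>Vn k. (if v = s then 1 else 0) * amp v) = amp s"
proof -
  have "(\<Sum>v\<in>Vn k. (if v = s then 1 else 0) * amp v) = (\<Sum>v\<in>Vn k. (if v = s then amp s else 0))"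
    by (intro sum.cong) auto
  also have "\<dots> = amp s" using assms sum.delta[OF finite_Vn[where m=k and 'a='a], of s "\<lambda>_. amp s"] by simp
  finally show ?thesis .
qed

lemma apply_channel_cong:
  assumes "\<And>a a'. a \<in> lab J \<Longrightarrow> a' \<in> lab J \<Longrightarrow> \<rho>1 a a' = \<rho>2 a a'"
  shows "apply_channel J Ks \<rho>1 t t' = apply_channel J Ks \<rho>2 t t'"
  unfolding apply_channel_def using assms by (intro arg_cong[where f = sum_list] map_cong refl sum.cong) auto

lemma fail1:
  fixes amp :: "(nat \<Rightarrow> 'a::{field,finite}) \<Rightarrow> (nat \<Rightarrow> 'a) \<Rightarrow> complex"
  assumes s: "s \<in> Vn k" "s' \<in> Vn k" "s \<noteq> s'"
    and c: "c \<in> lab ({0..<N} - J)"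
    and sh: "\<And>x. amp s (x + c) = amp s' x"
  shows "\<not> gauth N J k amp"
proof
  assume "gauth N J k amp"
  then obtain Ks where out: "\<And>phi t t'. t \<in> Vn k \<Longrightarrow> t' \<in> Vn k \<Longrightarrow>
        apply_channel J Ks (reduced N J (\<lambda>x. \<Sum>s\<in>Vn k. phi s * amp s x)) t t' = phi t * cnj (phi t')"
    unfolding gauth_def by blast
  have st: "(\<lambda>x. \<Sum>v\<in>Vn k. (\<lambda>v. if v = u then 1 else 0) v * amp v x) = amp u" if "u \<in> Vn k" for u
    using sum_one_delta[OF that, of "\<lambda>v. amp v _"] by (simp add: fun_eq_iff)
  have R: "reduced N J (amp s) = reduced N J (amp s')"
  proof (intro ext)
    fix a a'
    let ?B = "lab ({0..<N} - J) :: (nat \<Rightarrow> 'a) set"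
    have "(\<Sum>b\<in>?B. amp s (a + b) * cnj (amp s (a' + b))) = (\<Sum>b\<in>?B. amp s' (a + b) * cnj (amp s' (a' + b)))"
    proof (rule sum.reindex_bij_witness[of _ "\<lambda>b. b + c" "\<lambda>b. b - c"])
      show "\<And>b. b \<in> ?B \<Longrightarrow> b - c + c = b" by simp
      show "\<And>b. b \<in> ?B \<Longrightarrow> b - c \<in> ?B" by (rule lab_diff[OF _ c])
      show "\<And>b. b \<in> ?B \<Longrightarrow> b + c - c = b" by simp
      show "\<And>b. b \<in> ?B \<Longrightarrow> b + c \<in> ?B" by (rule lab_add[OF _ c])
      show "amp s' (a + (b - c)) * cnj (amp s' (a' + (b - c))) = amp s (a + b) * cnj (amp s (a' + b))"
        if "b \<in> ?B" for b
        using sh[of "a + (b - c)"] sh[of "a' + (b - c)"] by (simp add: algebra_simps)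
    qed
    then show "reduced N J (amp s) a a' = reduced N J (amp s') a a'"
      by (simp add: reduced_def vadd_eq)
  qed
  have "apply_channel J Ks (reduced N J (amp s)) s s = 1"
    using out[of s s "\<lambda>v. if v = s then 1 else 0"] st[OF s(1)] s by simp
  moreover have "apply_channel J Ks (reduced N J (amp s')) s s = 0"
    using out[of s s "\<lambda>v. if v = s' then 1 else 0"] st[OF s(2)] s by simp
  ultimately show False using R by simp
qed

lemma fail2:
  fixes amp :: "(nat \<Rightarrow> 'a::{field,finite}) \<Rightarrow> (nat \<Rightarrow> 'a) \<Rightarrow> complex"
  assumes s: "s \<in> Vn k" "s' \<in> Vn k" "s \<noteq> s'"
    and dis: "\<And>x x'. (\<forall>i. i \<notin> J \<longrightarrow> x i = x' i) \<Longrightarrow> amp s x * amp s' x' = 0"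
  shows "\<not> gauth N J k amp"
proof
  assume "gauth N J k amp"
  then obtain Ks where out: "\<And>phi t t'. t \<in> Vn k \<Longrightarrow> t' \<in> Vn k \<Longrightarrow>
        apply_channel J Ks (reduced N J (\<lambda>x. \<Sum>s\<in>Vn k. phi s * amp s x)) t t' = phi t * cnj (phi t')"
    unfolding gauth_def by blast
  define p1 where "p1 = (\<lambda>v. if v = s then 1 else if v = s' then (1::complex) else 0)"
  define p2 where "p2 = (\<lambda>v. if v = s then 1 else if v = s' then (-1::complex) else 0)"
  have e1: "(\<lambda>x. \<Sum>v\<in>Vn k. p1 v * amp v x) = (\<lambda>x. amp s x + amp s' x)"
    using sum_two_delta[OF s, of 1 1 "\<lambda>v. amp v _"] by (simp add: p1_def fun_eq_iff)
  have e2: "(\<lambda>x. \<Sum>v\<in>Vn k. p2 v * amp v x) = (\<lambda>x. amp s x - amp s' x)"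
    using sum_two_delta[OF s, of 1 "-1" "\<lambda>v. amp v _"] by (simp add: p2_def fun_eq_iff)
  have R: "reduced N J (\<lambda>x. amp s x + amp s' x) a a' = reduced N J (\<lambda>x. amp s x - amp s' x) a a'"
    if "a \<in> lab J" "a' \<in> lab J" for a a'
    unfolding reduced_def
  proof (rule sum.cong[OF refl])
    fix b
    have agree: "\<forall>i. i \<notin> J \<longrightarrow> vadd a b i = vadd a' b i" using that by (simp add: lab_def vadd_def)
    then have "\<forall>i. i \<notin> J \<longrightarrow> vadd a' b i = vadd a b i" by simp
    note z1 = dis[OF agree] and z2 = dis[OF this]
    let ?A = "amp s (vadd a b)" and ?A' = "amp s' (vadd a b)" and ?C = "amp s (vadd a' b)" and ?C' = "amp s' (vadd a' b)"
    have h1: "?A * cnj ?C' = 0" using z1 by auto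
    have h2: "?A' * cnj ?C = 0" using z2 by (auto simp: mult.commute)
    have "(?A + ?A') * cnj (?C + ?C') = (?A - ?A') * cnj (?C - ?C') + 2 * (?A * cnj ?C') + 2 * (?A' * cnj ?C)"
      by (simp add: algebra_simps)
    also have "\<dots> = (?A - ?A') * cnj (?C - ?C')" by (simp only: h1 h2 mult_zero_right add_0_right)
    finally show "(?A + ?A') * cnj (?C + ?C') = (?A - ?A') * cnj (?C - ?C')" .
  qed
  have "apply_channel J Ks (reduced N J (\<lambda>x. amp s x + amp s' x)) s s' = 1"
    using out[of s s' p1] e1 s by (simp add: p1_def)
  moreover have "apply_channel J Ks (reduced N J (\<lambda>x. amp s x - amp s' x)) s s' = -1"
    using out[of s s' p2] e2 s by (simp add: p2_def)
  moreover have "apply_channel J Ks (reduced N J (\<lambda>x. amp s x + amp s' x)) s s'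
      = apply_channel J Ks (reduced N J (\<lambda>x. amp s x - amp s' x)) s s'"
    by (rule apply_channel_cong) (rule R)
  ultimately show False by simp
qed



lemma split_JB:
  fixes p :: "nat \<Rightarrow> 'a::field"
  assumes "p \<in> lab J" "p' \<in> lab J" "q \<in> lab (X - J)" "q' \<in> lab (X - J)" "p + q = p' + q'"
  shows "p = p' \<and> q = q'"
proof -
  have "p i = p' i \<and> q i = q' i" for i
  proof (cases "i \<in> J")
    case True
    then have "q i = 0" "q' i = 0" using assms(3,4) by (auto simp: lab_def)
    then show ?thesis using fun_cong[OF assms(5), of i] by simp
  next
    case False
    then have "p i = 0" "p' i = 0" using assms(1,2) by (auto simp: lab_def)
    then show ?thesis using fun_cong[OF assms(5), of i] by simp
  qed
  then show ?thesis by (simp add: fun_eq_iff)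
qed

lemma ac_expand:
  fixes K :: "(nat \<Rightarrow> 'a::{field,finite}) \<Rightarrow> (nat \<Rightarrow> 'a) \<Rightarrow> complex"
  assumes "finite J"
  shows "(\<Sum>a\<in>lab J. \<Sum>a'\<in>lab J. K t a * reduced N J \<psi> a a' * cnj (K t' a'))
    = (\<Sum>b\<in>lab ({0..<N} - J). (\<Sum>a\<in>lab J. K t a * \<psi> (a + b)) * cnj (\<Sum>a'\<in>lab J. K t' a' * \<psi> (a' + b)))"
proof -
  let ?B = "lab ({0..<N} - J) :: (nat \<Rightarrow> 'a) set"
  have fJ: "finite (lab J :: (nat \<Rightarrow> 'a) set)" using assms by (rule finite_lab)
  have fB: "finite ?B" by (rule finite_lab) simp
  have "(\<Sum>a\<in>lab J. \<Sum>a'\<in>lab J. K t a * reduced N J \<psi> a a' * cnj (K t' a'))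
      = (\<Sum>a\<in>lab J. \<Sum>a'\<in>lab J. \<Sum>b\<in>?B. (K t a * \<psi> (a + b)) * (cnj (K t' a') * cnj (\<psi> (a' + b))))"
    unfolding reduced_def vadd_eq
    by (intro sum.cong refl) (simp add: sum_distrib_left sum_distrib_right mult_ac)
  also have "\<dots> = (\<Sum>a\<in>lab J. \<Sum>b\<in>?B. \<Sum>a'\<in>lab J. (K t a * \<psi> (a + b)) * (cnj (K t' a') * cnj (\<psi> (a' + b))))"
    by (rule sum.cong[OF refl], rule sum.swap)
  also have "\<dots> = (\<Sum>b\<in>?B. \<Sum>a\<in>lab J. \<Sum>a'\<in>lab J. (K t a * \<psi> (a + b)) * (cnj (K t' a') * cnj (\<psi> (a' + b))))"
    by (rule sum.swap)
  also have "\<dots> = (\<Sum>b\<in>?B. (\<Sum>a\<in>lab J. K t a * \<psi> (a + b)) * cnj (\<Sum>a'\<in>lab J. K t' a' * \<psi> (a' + b)))"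
    by (intro sum.cong refl) (simp add: cnj_sum sum_product)
  finally show ?thesis .
qed

lemma apply_channel_expand:
  fixes Ks :: "((nat \<Rightarrow> 'a::{field,finite}) \<Rightarrow> (nat \<Rightarrow> 'a) \<Rightarrow> complex) list"
  assumes "finite J"
  shows "apply_channel J Ks (reduced N J \<psi>) t t'
    = (\<Sum>K\<leftarrow>Ks. \<Sum>b\<in>lab ({0..<N} - J). (\<Sum>a\<in>lab J. K t a * \<psi> (a + b)) * cnj (\<Sum>a'\<in>lab J. K t' a' * \<psi> (a' + b)))"
  unfolding apply_channel_def by (simp only: ac_expand[OF assms])

lemma dd_sum:
  fixes S1 :: "'b set" and S2 :: "'c set"
  assumes "finite S1" "finite S2" "m0 \<in> S1" "t0 \<in> S2"
  shows "(\<Sum>m\<in>S1. \<Sum>t\<in>S2. (if c \<and> m = m0 \<and> t = t0 then 1 else 0)) = (if c then 1 else (0::complex))"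
proof -
  have "(\<Sum>t\<in>S2. (if c \<and> m = m0 \<and> t = t0 then 1 else 0)) = (if m = m0 then (if c then 1 else (0::complex)) else 0)" for m
    using assms by (cases "c \<and> m = m0") auto
  then show ?thesis using assms by simp
qed

lemma count_sum:
  fixes S1 :: "'b set" and S2 :: "'c set"
  assumes "finite S1" "finite S2" "Om \<subseteq> S1 \<times> S2"
  shows "(\<Sum>m\<in>S1. \<Sum>b\<in>S2. (if (m, b) \<in> Om then X else 0)) = of_nat (card Om) * (X::complex)"
proof -
  have "(\<Sum>m\<in>S1. \<Sum>b\<in>S2. (if (m, b) \<in> Om then X else 0)) = (\<Sum>p\<in>S1 \<times> S2. (if p \<in> Om then X else 0))"
    by (simp add: sum.cartesian_product)
  also have "\<dots> = (\<Sum>p\<in>(S1 \<times> S2) \<inter> Om. X)"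
    by (rule sum.inter_restrict[symmetric]) (use assms in simp)
  also have "(S1 \<times> S2) \<inter> Om = Om" using assms by auto
  finally show ?thesis by simp
qed

lemma cnj_ind: "cnj (if P then 1 else 0) * (if Q then 1 else 0) = (if P \<and> Q then 1 else (0::complex))"
  by simp

lemma rec:
  fixes amp :: "(nat \<Rightarrow> 'a::{field,finite}) \<Rightarrow> (nat \<Rightarrow> 'a) \<Rightarrow> complex"
    and w :: "(nat \<Rightarrow> 'a) \<Rightarrow> (nat \<Rightarrow> 'a)" and Om :: "((nat \<Rightarrow> 'a) \<times> (nat \<Rightarrow> 'a)) set"
    and cc :: complex
  assumes J: "J \<subseteq> {0..<N}"
    and wJ: "\<And>t. t \<in> Vn k \<Longrightarrow> w t \<in> lab J"
    and Om: "Om \<subseteq> lab J \<times> lab ({0..<N} - J)"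
    and inj: "\<And>t t' m b m' b'. t \<in> Vn k \<Longrightarrow> t' \<in> Vn k \<Longrightarrow> (m, b) \<in> Om \<Longrightarrow> (m', b') \<in> Om \<Longrightarrow>
       w t + m = w t' + m' \<Longrightarrow> t = t'"
    and amp: "\<And>t x. t \<in> Vn k \<Longrightarrow> amp t x = (if \<exists>m b. (m, b) \<in> Om \<and> x = w t + m + b then cc else 0)"
    and norm: "cc * cnj cc * of_nat (card Om) = 1"
  shows "gauth N J k amp"
proof -
  define B where "B = {0..<N} - J"
  have fJ: "finite J" using J finite_subset by blast
  have fLJ: "finite (lab J :: (nat \<Rightarrow> 'a) set)" using fJ by (rule finite_lab)
  have fLB: "finite (lab B :: (nat \<Rightarrow> 'a) set)" unfolding B_def by (rule finite_lab) simp
  have fV: "finite (Vn k :: (nat \<Rightarrow> 'a) set)" by (rule finite_Vn)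
  have zV: "(0::nat \<Rightarrow> 'a) \<in> Vn k" by (rule lab_zero)
  define Ms where "Ms = fst ` Om"
  have MsJ: "Ms \<subseteq> lab J" using Om Ms_def by auto
  have U: "t = t' \<and> m = m'" if tm: "t \<in> Vn k" "t' \<in> Vn k" "m \<in> Ms" "m' \<in> Ms" "w t + m = w t' + m'" for t t' m m'
  proof -
    obtain b b' where "(m, b) \<in> Om" "(m', b') \<in> Om" using tm(3,4) Ms_def by force
    then have "t = t'" using inj tm by blast
    then show ?thesis using tm(5) by simp
  qed
  define T where "T = {w t + m | t m. t \<in> Vn k \<and> m \<in> Ms}"
  define P1 where "P1 m t a \<longleftrightarrow> a \<in> T \<and> t \<in> Vn k \<and> m \<in> Ms \<and> a = w t + m" for m t a
  define P2 where "P2 m t a \<longleftrightarrow> a \<notin> T \<and> t = 0 \<and> a = m" for m t a :: "nat \<Rightarrow> 'a"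
  define K1 where "K1 m t a = (if P1 m t a then 1 else (0::complex))" for m t a
  define K2 where "K2 m t a = (if P2 m t a then 1 else (0::complex))" for m t a
  obtain ms :: "(nat \<Rightarrow> 'a) list" where ms: "set ms = lab J" "distinct ms" using finite_distinct_list[OF fLJ] by blast
  define Ks where "Ks = map K1 ms @ map K2 ms"
  have sl: "(\<Sum>K\<leftarrow>Ks. g K) = (\<Sum>m\<in>lab J. g (K1 m)) + (\<Sum>m\<in>lab J. g (K2 m))" for g :: "_ \<Rightarrow> complex"
    unfolding Ks_def using ms by (simp add: sum_list_distinct_conv_sum_set)
  have tp: "trace_preserving J k Ks"
    unfolding trace_preserving_def
  proof (intro ballI)
    fix a a' :: "nat \<Rightarrow> 'a" assume a: "a \<in> lab J" and a': "a' \<in> lab J"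
    show "(\<Sum>K\<leftarrow>Ks. \<Sum>t\<in>Vn k. cnj (K t a) * K t a') = (if a = a' then 1 else 0)"
    proof (cases "a \<in> T")
      case True
      then obtain t0 m0 where tm: "t0 \<in> Vn k" "m0 \<in> Ms" "a = w t0 + m0" unfolding T_def by blast
      have "(\<Sum>m\<in>lab J. \<Sum>t\<in>Vn k. cnj (K2 m t a) * K2 m t a') = 0"
        using True by (simp add: K2_def P2_def)
      moreover have "(\<Sum>m\<in>lab J. \<Sum>t\<in>Vn k. cnj (K1 m t a) * K1 m t a')
          = (\<Sum>m\<in>lab J. \<Sum>t\<in>Vn k. (if a = a' \<and> m = m0 \<and> t = t0 then 1 else 0))"
      proof (intro sum.cong refl)
        fix m t :: "nat \<Rightarrow> 'a" assume "m \<in> lab J" "t \<in> Vn k"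
        have "P1 m t a \<and> P1 m t a' \<longleftrightarrow> a = a' \<and> m = m0 \<and> t = t0"
        proof
          assume h: "P1 m t a \<and> P1 m t a'"
          then have h2: "t \<in> Vn k" "m \<in> Ms" "a = w t + m" "a' = w t + m" unfolding P1_def by blast+
          have e: "w t + m = w t0 + m0" using h2(3) tm(3) by metis
          have "t = t0 \<and> m = m0" by (rule U[OF h2(1) tm(1) h2(2) tm(2) e])
          then show "a = a' \<and> m = m0 \<and> t = t0" using h2 by simp
        next
          assume "a = a' \<and> m = m0 \<and> t = t0"
          then show "P1 m t a \<and> P1 m t a'" using tm True unfolding P1_def by blast
        qed
        then show "cnj (K1 m t a) * K1 m t a' = (if a = a' \<and> m = m0 \<and> t = t0 then 1 else 0)"
          unfolding K1_def cnj_ind by simp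
      qed
      moreover have "\<dots> = (if a = a' then 1 else 0)"
        using tm MsJ by (intro dd_sum fLJ fV) auto
      ultimately show ?thesis by (simp add: sl)
    next
      case False
      have k1z: "(\<Sum>m\<in>lab J. \<Sum>t\<in>Vn k. cnj (K1 m t a) * K1 m t a') = 0"
        using False by (simp add: K1_def P1_def)
      have pw: "cnj (K2 m t a) * K2 m t a' = (if a = a' \<and> m = a \<and> t = 0 then 1 else 0)" for m t
      proof -
        have "P2 m t a \<and> P2 m t a' \<longleftrightarrow> a = a' \<and> m = a \<and> t = 0"
          using False unfolding P2_def by blast
        then show ?thesis unfolding K2_def cnj_ind by simp
      qed
      moreover have "(\<Sum>m\<in>lab J. \<Sum>t\<in>Vn k. cnj (K2 m t a) * K2 m t a')
          = (\<Sum>m\<in>lab J. \<Sum>t\<in>Vn k. (if a = a' \<and> m = a \<and> t = (0::nat\<Rightarrow>'a) then 1 else (0::complex)))"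
        by (simp only: pw)
      moreover have "\<dots> = (if a = a' then 1 else 0)"
        using a zV by (intro dd_sum fLJ fV) auto
      ultimately show ?thesis using k1z by (simp add: sl)
    qed
  qed
  have out: "apply_channel J Ks (reduced N J (\<lambda>x. \<Sum>s\<in>Vn k. phi s * amp s x)) t t' = phi t * cnj (phi t')"
    if t: "t \<in> Vn k" and t': "t' \<in> Vn k" for phi t t'
  proof -
    define \<psi> where "\<psi> x = (\<Sum>s\<in>Vn k. phi s * amp s x)" for x
    define h where "h K u b = (\<Sum>a\<in>lab J. K u a * \<psi> (a + b))"
      for K :: "(nat \<Rightarrow> 'a) \<Rightarrow> (nat \<Rightarrow> 'a) \<Rightarrow> complex" and u b :: "nat \<Rightarrow> 'a"
    have psi0: "\<psi> (a + b) = 0" if "a \<in> lab J" "a \<notin> T" "b \<in> lab B" for a b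
    proof -
      have "amp s (a + b) = 0" if s: "s \<in> Vn k" for s
      proof -
        have "\<not> ((m', b') \<in> Om \<and> a + b = w s + m' + b')" for m' b'
        proof
          assume h: "(m', b') \<in> Om \<and> a + b = w s + m' + b'"
          then have "m' \<in> lab J" "b' \<in> lab B" "m' \<in> Ms" using Om B_def Ms_def by force+
          moreover have "w s + m' \<in> lab J" using lab_add[OF wJ[OF s]] \<open>m' \<in> lab J\<close> by blast
          moreover have "a + b = (w s + m') + b'" using h by simp
          ultimately have "a = w s + m'"
            using split_JB[of a J "w s + m'" b "{0..<N}" b'] \<open>a \<in> lab J\<close> \<open>b \<in> lab B\<close>
            by (simp add: B_def)
          then show False using \<open>a \<notin> T\<close> s \<open>m' \<in> Ms\<close> T_def by blast
        qed
        then show ?thesis using amp[OF s] by auto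
      qed
      then show ?thesis by (simp add: \<psi>_def)
    qed
    have hK2: "h (K2 m) u b = 0" if "b \<in> lab B" for m u b
      unfolding h_def
    proof (rule sum.neutral, rule ballI)
      fix a :: "nat \<Rightarrow> 'a" assume "a \<in> lab J"
      then show "K2 m u a * \<psi> (a + b) = 0"
        using psi0[OF _ _ that] by (auto simp: K2_def P2_def)
    qed
    have psi1: "\<psi> (w u + m + b) = phi u * (if (m, b) \<in> Om then cc else 0)"
      if u: "u \<in> Vn k" and m: "m \<in> Ms" and b: "b \<in> lab B" for u m b
    proof -
      have "amp s (w u + m + b) = (if s = u \<and> (m, b) \<in> Om then cc else 0)" if s: "s \<in> Vn k" for s
      proof -
        have "(\<exists>m' b'. (m', b') \<in> Om \<and> w u + m + b = w s + m' + b') \<longleftrightarrow> s = u \<and> (m, b) \<in> Om"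
        proof
          assume "\<exists>m' b'. (m', b') \<in> Om \<and> w u + m + b = w s + m' + b'"
          then obtain m' b' where h: "(m', b') \<in> Om" "w u + m + b = w s + m' + b'" by blast
          then have "m' \<in> lab J" "b' \<in> lab B" "m' \<in> Ms" using Om B_def Ms_def by force+
          moreover have "w u + m \<in> lab J" using wJ[OF u] m MsJ lab_add by blast
          moreover have "w s + m' \<in> lab J" using wJ[OF s] \<open>m' \<in> lab J\<close> lab_add by blast
          ultimately have "w u + m = w s + m' \<and> b = b'"
            using split_JB[of "w u + m" J "w s + m'" b "{0..<N}" b'] h(2) b by (simp add: B_def)
          then show "s = u \<and> (m, b) \<in> Om" using U[OF u s m \<open>m' \<in> Ms\<close>] h(1) by auto
        next
          assume "s = u \<and> (m, b) \<in> Om"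
          then show "\<exists>m' b'. (m', b') \<in> Om \<and> w u + m + b = w s + m' + b'" by blast
        qed
        then show ?thesis using amp[OF s] by simp
      qed
      then have "\<psi> (w u + m + b) = (\<Sum>s\<in>Vn k. (if s = u then phi u * (if (m, b) \<in> Om then cc else 0) else 0))"
        unfolding \<psi>_def by (intro sum.cong refl) auto
      also have "\<dots> = phi u * (if (m, b) \<in> Om then cc else 0)" using u fV by simp
      finally show ?thesis .
    qed
    have hK1: "h (K1 m) u b = (if (m, b) \<in> Om then phi u * cc else 0)"
      if m: "m \<in> lab J" and u: "u \<in> Vn k" and b: "b \<in> lab B" for m u b
    proof (cases "m \<in> Ms")
      case True
      have "h (K1 m) u b = (\<Sum>a\<in>lab J. (if a = w u + m then \<psi> (w u + m + b) else 0))"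
        unfolding h_def K1_def P1_def T_def using True u by (intro sum.cong refl) auto
      also have "\<dots> = \<psi> (w u + m + b)"
      proof -
        have "w u + m \<in> lab J" using lab_add[OF wJ[OF u] m] .
        then show ?thesis using fLJ by simp
      qed
      finally show ?thesis using psi1[OF u True b] by simp
    next
      case False
      then have "(m, b) \<notin> Om" using Ms_def by force
      moreover have "h (K1 m) u b = 0" unfolding h_def K1_def P1_def using False by simp
      ultimately show ?thesis by simp
    qed
    have "apply_channel J Ks (reduced N J \<psi>) t t' = (\<Sum>K\<leftarrow>Ks. \<Sum>b\<in>lab B. h K t b * cnj (h K t' b))"
      unfolding h_def B_def by (rule apply_channel_expand[OF fJ])
    also have "\<dots> = (\<Sum>m\<in>lab J. \<Sum>b\<in>lab B. h (K1 m) t b * cnj (h (K1 m) t' b))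
                   + (\<Sum>m\<in>lab J. \<Sum>b\<in>lab B. h (K2 m) t b * cnj (h (K2 m) t' b))"
      by (rule sl)
    also have "(\<Sum>m\<in>lab J. \<Sum>b\<in>lab B. h (K2 m) t b * cnj (h (K2 m) t' b)) = 0"
      using hK2 by simp
    also have "(\<Sum>m\<in>lab J. \<Sum>b\<in>lab B. h (K1 m) t b * cnj (h (K1 m) t' b))
        = (\<Sum>m\<in>lab J. \<Sum>b\<in>lab B. (if (m, b) \<in> Om then phi t * cnj (phi t') * (cc * cnj cc) else 0))"
      using hK1 t t' by (intro sum.cong refl) auto
    also have "\<dots> = of_nat (card Om) * (phi t * cnj (phi t') * (cc * cnj cc))"
      using Om by (intro count_sum fLJ fLB) (auto simp: B_def)
    also have "\<dots> = phi t * cnj (phi t')" using norm by (simp add: algebra_simps)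
    finally show ?thesis unfolding \<psi>_def by simp
  qed
  show ?thesis unfolding gauth_def using tp out by blast
qed



lemma ext_apply: "ext_vec n c r i = (if i < n then c i else r (i - n))"
  by (simp add: ext_vec_def)

lemma ext_add: "ext_vec n (c + c') (r + r') = ext_vec n c r + ext_vec n c' r'"
  by (simp add: ext_vec_def fun_eq_iff)

lemma ext_diff: "ext_vec n (c - c') (r - r') = ext_vec n c r - ext_vec n c' r'"
  by (simp add: ext_vec_def fun_eq_iff)

lemma ext_inj:
  assumes "ext_vec n c r = ext_vec n c' r'" "c \<in> Vn n" "c' \<in> Vn n"
  shows "c = c' \<and> r = r'"
proof -
  have "c i = c' i" for i
  proof (cases "i < n")
    case True then show ?thesis using fun_cong[OF assms(1), of i] by (simp add: ext_vec_def)
  next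
    case False then show ?thesis using assms(2,3) by (simp add: lab_def)
  qed
  moreover have "r j = r' j" for j
    using fun_cong[OF assms(1), of "n + j"] by (simp add: ext_vec_def)
  ultimately show ?thesis by (simp add: fun_eq_iff)
qed

lemma ext_Vn: "r \<in> Vn e \<Longrightarrow> ext_vec n c r \<in> Vn (n + e)"
  by (auto simp: lab_def ext_vec_def)

lemma ext_of_Vn: "c \<in> Vn n \<Longrightarrow> ext_vec n c 0 = c"
  by (auto simp: lab_def ext_vec_def fun_eq_iff)

locale ecss =
  fixes n e k f1 :: nat and F0 F1 :: "(nat \<Rightarrow> 'a::{field,finite}) set"
    and G01 G1 GE :: "nat \<Rightarrow> nat \<Rightarrow> 'a"
  assumes lc0: "linear_code n F0" and lc1: "linear_code n F1" and sub: "F1 \<subset> F0"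
    and gm1: "generator_matrix G1 f1 n F1"
    and gm0: "generator_matrix (stack G01 k G1) (k + f1) n F0"
    and mE: "is_matrix GE e n"
    and cap: "F0 \<inter> rowspace GE e = {zerov}"
begin

abbreviation g where "g s \<equiv> comb G01 k s"
abbreviation E where "E r \<equiv> comb GE e r"

definition S where "S s = {ext_vec n (g s + p + E r2) r2 | p r2. p \<in> F1 \<and> r2 \<in> Vn e}"

definition cc :: complex where "cc = 1 / complex_of_real (sqrt (real (card (UNIV::'a set) ^ (f1 + e))))"

lemma sF0: "subsp F0" using lc0 by (rule linear_code_subsp)
lemma sF1: "subsp F1" using lc1 by (rule linear_code_subsp)
lemma F0Vn: "F0 \<subseteq> Vn n" using lc0 by (simp add: linear_code_def)
lemma F1Vn: "F1 \<subseteq> Vn n" using lc1 by (simp add: linear_code_def)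

lemma F1_img: "F1 = comb G1 f1 ` Vn f1"
  using gm1 by (simp add: generator_matrix_def rowspace_Vn)

lemma F0_rs: "F0 = rowspace (stack G01 k G1) (k + f1)"
  using gm0 by (simp add: generator_matrix_def)

lemma comb_zero_coeffs:
  assumes "rows_independent G m" "comb G m r = 0" "j < m"
  shows "r j = 0"
  using assms by (simp add: rows_independent_def zerov_eq)

lemma F1_inj: "inj_on (comb G1 f1) (Vn f1)"
proof (rule inj_onI)
  fix r r' assume r: "r \<in> Vn f1" "r' \<in> Vn f1" "comb G1 f1 r = comb G1 f1 r'"
  have "comb G1 f1 (r - r') = 0" using r(3) by (simp add: comb_diff)
  moreover have ri: "rows_independent G1 f1" using gm1 by (simp add: generator_matrix_def)
  ultimately have d: "(r - r') j = 0" if "j < f1" for j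
    using comb_zero_coeffs[OF ri _ that] by blast
  have "r j = r' j" for j
  proof (cases "j < f1")
    case True then show ?thesis using d[OF True] by simp
  next
    case False then show ?thesis using r(1,2) by (simp add: lab_def)
  qed
  then show "r = r'" by (simp add: fun_eq_iff)
qed

lemma g_Vn: "g s \<in> Vn n"
proof -
  have im: "is_matrix (stack G01 k G1) (k + f1) n" using gm0 by (simp add: generator_matrix_def)
  have "G01 j i = 0" if ji: "j < k" "i \<ge> n" for j i
  proof -
    have "stack G01 k G1 j i = 0" using im ji(2) unfolding is_matrix_def by blast
    then show ?thesis using ji(1) by (simp add: stack_def)
  qed
  then show ?thesis by (simp add: lab_def comb_def)
qed

lemma E_Vn: "E r \<in> Vn n" using mE by (rule comb_Vn)

lemma E_rs: "E r \<in> rowspace GE e" by (auto simp: rowspace_def)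

lemma F0_char: "F0 = {g s + p | s p. s \<in> Vn k \<and> p \<in> F1}"
proof
  show "F0 \<subseteq> {g s + p | s p. s \<in> Vn k \<and> p \<in> F1}"
  proof
    fix x assume "x \<in> F0"
    then obtain r where r: "x = comb (stack G01 k G1) (k + f1) r" using F0_rs by (auto simp: rowspace_def)
    define s where "s = (\<lambda>j. if j < k then r j else (0::'a))"
    have "x = g s + comb G1 f1 (\<lambda>j. r (j + k))"
      using r by (simp add: comb_stack s_def comb_restrict)
    moreover have "comb G1 f1 (\<lambda>j. r (j + k)) \<in> F1"
      using gm1 by (auto simp: generator_matrix_def rowspace_def)
    moreover have "s \<in> Vn k" by (simp add: s_def lab_def)
    ultimately show "x \<in> {g s + p | s p. s \<in> Vn k \<and> p \<in> F1}" by blast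
  qed
next
  show "{g s + p | s p. s \<in> Vn k \<and> p \<in> F1} \<subseteq> F0"
  proof
    fix x assume "x \<in> {g s + p | s p. s \<in> Vn k \<and> p \<in> F1}"
    then obtain s p where sp: "x = g s + p" "p \<in> F1" by blast
    then obtain r1 where "p = comb G1 f1 r1" using F1_img by blast
    then have "x = comb (stack G01 k G1) (k + f1) (\<lambda>j. if j < k then s j else r1 (j - k))"
      using sp by (simp add: comb_stack2)
    then show "x \<in> F0" using F0_rs by (auto simp: rowspace_def)
  qed
qed

lemma g_F0: "s \<in> Vn k \<Longrightarrow> g s \<in> F0"
  using F0_char subsp_zero[OF sF1] by force

lemma g_in_F1:
  assumes s: "s \<in> Vn k" and gp: "g s \<in> F1"
  shows "s = 0"
proof -
  obtain r1 where r1: "g s = comb G1 f1 r1" using gp F1_img by blast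
  have "comb (stack G01 k G1) (k + f1) (\<lambda>j. if j < k then s j else (- r1) (j - k)) = g s + comb G1 f1 (- r1)"
    by (simp add: comb_stack2)
  also have "\<dots> = 0" using r1 by (simp add: comb_uminus)
  finally have z: "comb (stack G01 k G1) (k + f1) (\<lambda>j. if j < k then s j else (- r1) (j - k)) = 0" .
  have "s j = 0" for j
  proof (cases "j < k")
    case True
    then have "(\<lambda>j. if j < k then s j else (- r1) (j - k)) j = 0"
      proof -
      have ri: "rows_independent (stack G01 k G1) (k + f1)" using gm0 by (simp add: generator_matrix_def)
      show ?thesis using comb_zero_coeffs[OF ri z, of j] True by simp
    qed
    then show ?thesis using True by simp
  next
    case False then show ?thesis using s by (simp add: lab_def)
  qed
  then show ?thesis by (simp add: fun_eq_iff)
qed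

lemma cap': "x \<in> F0 \<Longrightarrow> x \<in> rowspace GE e \<Longrightarrow> x = 0"
  using cap by (auto simp: zerov_eq)


lemma comb_Vn_G1: "comb G1 f1 r \<in> Vn n"
  using gm1 by (intro comb_Vn) (simp add: generator_matrix_def)

lemma amp_formula:
  assumes s: "s \<in> Vn k"
  shows "enc_amp n e k f1 G01 G1 GE s x = (if x \<in> S s then cc else 0)"
proof -
  define R where "R = {(r1, r2). r1 \<in> Vn f1 \<and> r2 \<in> Vn e \<and>
        x = ext_vec n (vadd (vadd (comb G01 k s) (comb G1 f1 r1)) (comb GE e r2)) r2}"
  have R': "R = {(r1, r2). r1 \<in> Vn f1 \<and> r2 \<in> Vn e \<and> x = ext_vec n (g s + comb G1 f1 r1 + E r2) r2}"
    by (simp add: R_def vadd_eq)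
  have "card R = (if x \<in> S s then 1 else 0)"
  proof (cases "x \<in> S s")
    case True
    then obtain p r2 where pr: "p \<in> F1" "r2 \<in> Vn e" "x = ext_vec n (g s + p + E r2) r2"
      unfolding S_def by blast
    then obtain r1 where r1: "r1 \<in> Vn f1" "p = comb G1 f1 r1" using F1_img by blast
    have "R = {(r1, r2)}"
    proof (rule set_eqI)
      fix ab :: "(nat \<Rightarrow> 'a) \<times> (nat \<Rightarrow> 'a)"
      obtain a b where ab: "ab = (a, b)" by (cases ab)
      have "(a, b) \<in> R \<longleftrightarrow> a = r1 \<and> b = r2"
      proof
        assume h: "(a, b) \<in> R"
        then have h1: "a \<in> Vn f1" "b \<in> Vn e" "ext_vec n (g s + comb G1 f1 a + E b) b = ext_vec n (g s + p + E r2) r2"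
          using pr(3) unfolding R' by auto
        have v1: "g s + comb G1 f1 a + E b \<in> Vn n"
          by (intro lab_add g_Vn comb_Vn_G1 E_Vn)
        have v2: "g s + p + E r2 \<in> Vn n"
          unfolding r1(2) by (intro lab_add g_Vn comb_Vn_G1 E_Vn)
        from ext_inj[OF h1(3) v1 v2] have "g s + comb G1 f1 a + E b = g s + p + E r2" "b = r2" by auto
        then have "comb G1 f1 a = comb G1 f1 r1" using r1(2) by simp
        then have "a = r1" using F1_inj h1(1) r1(1) by (auto dest: inj_onD)
        then show "a = r1 \<and> b = r2" using \<open>b = r2\<close> by simp
      next
        assume "a = r1 \<and> b = r2"
        then show "(a, b) \<in> R" using r1 pr unfolding R' by simp
      qed
      then show "ab \<in> R \<longleftrightarrow> ab \<in> {(r1, r2)}" using ab by simp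
    qed
    then show ?thesis using True by simp
  next
    case False
    have "R = {}"
    proof (rule ccontr)
      assume "R \<noteq> {}"
      then obtain a b where "a \<in> Vn f1" "b \<in> Vn e" "x = ext_vec n (g s + comb G1 f1 a + E b) b"
        unfolding R' by auto
      moreover have "comb G1 f1 a \<in> F1" using F1_img \<open>a \<in> Vn f1\<close> by blast
      ultimately have "x \<in> S s" unfolding S_def by blast
      then show False using False by simp
    qed
    then show ?thesis using False by simp
  qed
  then show ?thesis unfolding enc_amp_def R_def[symmetric] cc_def by simp
qed

lemma encode_eq: "encode n e k f1 G01 G1 GE phi = (\<lambda>x. \<Sum>s\<in>Vn k. phi s * enc_amp n e k f1 G01 G1 GE s x)"
  by (simp add: fun_eq_iff encode_def)

lemma authorized_gauth: "authorized n e k f1 G01 G1 GE J = gauth (n + e) J k (enc_amp n e k f1 G01 G1 GE)"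
  by (simp add: authorized_def gauth_def encode_eq)

definition Bad1 where "Bad1 J \<longleftrightarrow> (\<exists>x\<in>code_sum F0 (rowspace GE e) - code_sum F1 (rowspace GE e). \<forall>i\<in>J. x i = 0)"
definition Bad2 where "Bad2 J \<longleftrightarrow> (\<exists>y\<in>dual n F1 - dual n F0. \<forall>i\<in>J. y i = 0)"

lemma rowspace_E: "x \<in> rowspace GE e \<Longrightarrow> \<exists>r. r \<in> Vn e \<and> x = E r"
  by (auto simp: rowspace_Vn)

lemma zero_Vn: "(0::nat \<Rightarrow> 'a) \<in> Vn m" by (rule lab_zero)

lemma g0: "g 0 = 0" by (rule comb_zero)

lemma bad1_fail:
  assumes J: "J \<subseteq> {0..<n}" and b: "Bad1 J"
  shows "\<not> gauth (n + e) J k (enc_amp n e k f1 G01 G1 GE)"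
proof -
  obtain x where x: "x \<in> code_sum F0 (rowspace GE e)" "x \<notin> code_sum F1 (rowspace GE e)" "\<forall>i\<in>J. x i = 0"
    using b unfolding Bad1_def by blast
  obtain f0 e0 where fe: "x = f0 + e0" "f0 \<in> F0" "e0 \<in> rowspace GE e"
    using x(1) unfolding code_sum_def vadd_eq by blast
  obtain r2 where r2: "r2 \<in> Vn e" "e0 = E r2" using rowspace_E[OF fe(3)] by blast
  obtain s p where sp: "s \<in> Vn k" "p \<in> F1" "f0 = g s + p" using fe(2) F0_char by blast
  have xe: "x = g s + p + E r2" using fe r2 sp by simp
  have sne: "s \<noteq> 0"
  proof
    assume "s = 0"
    then have "x = vadd p e0" using fe sp by (simp add: vadd_eq g0)
    then have "x \<in> code_sum F1 (rowspace GE e)" using sp(2) fe(3) unfolding code_sum_def by blast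
    then show False using x(2) by simp
  qed
  define c where "c = ext_vec n x r2"
  have c: "c \<in> lab ({0..<n + e} - J)"
  proof -
    have "c i = 0" if "i \<notin> {0..<n + e} - J" for i
    proof (cases "i \<in> J")
      case True then show ?thesis using J x(3) by (auto simp: c_def ext_vec_def)
    next
      case False
      then have "i \<ge> n + e" using that by auto
      then show ?thesis using r2(1) by (simp add: c_def ext_vec_def lab_def)
    qed
    then show ?thesis by (simp add: lab_def)
  qed
  have mem: "z + c \<in> S s \<longleftrightarrow> z \<in> S 0" for z
  proof
    assume "z + c \<in> S s"
    then obtain p' r' where pr: "p' \<in> F1" "r' \<in> Vn e" "z + c = ext_vec n (g s + p' + E r') r'"
      unfolding S_def by blast
    have "z = ext_vec n (g s + p' + E r') r' - c" using pr(3) by (simp add: algebra_simps)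
    also have "\<dots> = ext_vec n ((g s + p' + E r') - x) (r' - r2)" by (simp add: c_def ext_diff)
    also have "(g s + p' + E r') - x = g 0 + (p' - p) + E (r' - r2)" by (simp add: xe g0 comb_diff)
    finally have "z = ext_vec n (g 0 + (p' - p) + E (r' - r2)) (r' - r2)" .
    moreover have "p' - p \<in> F1" by (rule subsp_diff[OF sF1 pr(1) sp(2)])
    moreover have "r' - r2 \<in> Vn e" by (rule lab_diff[OF pr(2) r2(1)])
    ultimately show "z \<in> S 0" unfolding S_def by blast
  next
    assume "z \<in> S 0"
    then obtain p' r' where pr: "p' \<in> F1" "r' \<in> Vn e" "z = ext_vec n (g 0 + p' + E r') r'"
      unfolding S_def by blast
    have "z + c = ext_vec n ((g 0 + p' + E r') + x) (r' + r2)" by (simp add: c_def pr(3) ext_add)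
    also have "(g 0 + p' + E r') + x = g s + (p' + p) + E (r' + r2)" by (simp add: xe g0 comb_add)
    finally have "z + c = ext_vec n (g s + (p' + p) + E (r' + r2)) (r' + r2)" .
    moreover have "p' + p \<in> F1" by (rule subsp_add[OF sF1 pr(1) sp(2)])
    moreover have "r' + r2 \<in> Vn e" by (rule lab_add[OF pr(2) r2(1)])
    ultimately show "z + c \<in> S s" unfolding S_def by blast
  qed
  have sh: "enc_amp n e k f1 G01 G1 GE s (z + c) = enc_amp n e k f1 G01 G1 GE 0 z" for z
    using amp_formula[OF sp(1)] amp_formula[OF zero_Vn] mem by simp
  show ?thesis by (rule fail1[where amp = "enc_amp n e k f1 G01 G1 GE", OF sp(1) zero_Vn sne c sh])
qed

lemma dot_add: "(\<Sum>i<n. (a + b) i * (y::nat \<Rightarrow> 'a) i) = (\<Sum>i<n. a i * y i) + (\<Sum>i<n. b i * y i)"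
  by (simp add: distrib_right sum.distrib)
lemma dot_diff: "(\<Sum>i<n. (a - b) i * (y::nat \<Rightarrow> 'a) i) = (\<Sum>i<n. a i * y i) - (\<Sum>i<n. b i * y i)"
  by (simp add: left_diff_distrib sum_subtractf)

lemma bad2_fail:
  assumes J: "J \<subseteq> {0..<n}" and b: "Bad2 J"
  shows "\<not> gauth (n + e) J k (enc_amp n e k f1 G01 G1 GE)"
proof -
  obtain y where y: "y \<in> dual n F1" "y \<notin> dual n F0" "\<forall>i\<in>J. y i = 0"
    using b unfolding Bad2_def by blast
  have yV: "y \<in> Vn n" using y(1) by (simp add: dual_def)
  have y1: "(\<Sum>i<n. p i * y i) = 0" if "p \<in> F1" for p using y(1) that by (simp add: dual_def)
  obtain f0 where f0: "f0 \<in> F0" "(\<Sum>i<n. f0 i * y i) \<noteq> 0" using y(2) yV by (auto simp: dual_def)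
  obtain s p where sp: "s \<in> Vn k" "p \<in> F1" "f0 = g s + p" using f0(1) F0_char by blast
  have D: "(\<Sum>i<n. g s i * y i) \<noteq> 0" using f0(2) sp y1[OF sp(2)] dot_add[of "g s" p y] by simp
  have sne: "s \<noteq> 0" using D by (auto simp: g0)
  have dis: "enc_amp n e k f1 G01 G1 GE s x * enc_amp n e k f1 G01 G1 GE 0 x' = 0"
    if agree: "\<forall>i. i \<notin> J \<longrightarrow> x i = x' i" for x x'
  proof (rule ccontr)
    assume "enc_amp n e k f1 G01 G1 GE s x * enc_amp n e k f1 G01 G1 GE 0 x' \<noteq> 0"
    then have "x \<in> S s" "x' \<in> S 0" using amp_formula[OF sp(1)] amp_formula[OF zero_Vn]
      by (auto split: if_splits)
    then obtain p1 r p2 r' where pr: "p1 \<in> F1" "r \<in> Vn e" "x = ext_vec n (g s + p1 + E r) r"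
      "p2 \<in> F1" "r' \<in> Vn e" "x' = ext_vec n (g 0 + p2 + E r') r'"
      unfolding S_def by blast
    have "r j = r' j" for j
    proof -
      have "n + j \<notin> J" using J by auto
      then have "x (n + j) = x' (n + j)" using agree by blast
      then show ?thesis using pr(3,6) by (simp add: ext_vec_def)
    qed
    then have rr: "r = r'" by (simp add: fun_eq_iff)
    have z: "(g s + (p1 - p2)) i = 0" if i: "i < n" "i \<notin> J" for i
    proof -
      have "x i = x' i" using agree i(2) by blast
      then have "g s i + p1 i + E r i = p2 i + E r i" using pr(3,6) rr i(1) by (simp add: ext_vec_def g0)
      then show ?thesis by (simp add: algebra_simps)
    qed
    have "(\<Sum>i<n. (g s + (p1 - p2)) i * y i) = 0"
    proof (rule sum.neutral, rule ballI)
      fix i assume "i \<in> {..<n}"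
      then show "(g s + (p1 - p2)) i * y i = 0" using z[of i] y(3) by (cases "i \<in> J") auto
    qed
    moreover have "(\<Sum>i<n. (g s + (p1 - p2)) i * y i) = (\<Sum>i<n. g s i * y i)"
      using dot_add[of "g s" "p1 - p2" y] y1[OF subsp_diff[OF sF1 pr(1) pr(4)]] by simp
    ultimately show False using D by simp
  qed
  show ?thesis by (rule fail2[where amp = "enc_amp n e k f1 G01 G1 GE", OF sp(1) zero_Vn sne dis])
qed


lemma restr_ok:
  assumes J: "J \<subseteq> {0..<n}" and nb: "\<not> Bad2 J" and f0: "f0 \<in> F0"
  shows "\<exists>p\<in>F1. \<forall>i<n. i \<notin> J \<longrightarrow> f0 i = p i"
proof (rule ccontr)
  assume ne: "\<not> (\<exists>p\<in>F1. \<forall>i<n. i \<notin> J \<longrightarrow> f0 i = p i)"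
  define A where "A = {0..<n} - J"
  define rs where "rs f = (\<lambda>i. if i \<in> A then f i else 0)" for f :: "nat \<Rightarrow> 'a"
  define U where "U = rs ` F1"
  have sU: "subsp U"
  proof -
    have "rs 0 = 0" by (simp add: rs_def fun_eq_iff)
    then have "0 \<in> U" using subsp_zero[OF sF1] U_def by (metis image_eqI)
    moreover have "x + y \<in> U" if xy: "x \<in> U" "y \<in> U" for x y
    proof -
      obtain a b where ab: "a \<in> F1" "b \<in> F1" "x = rs a" "y = rs b" using xy U_def by auto
      have "x + y = rs (a + b)" using ab by (simp add: rs_def fun_eq_iff)
      then show ?thesis using subsp_add[OF sF1 ab(1,2)] U_def by auto
    qed
    moreover have "(\<lambda>i. c * x i) \<in> U" if xU: "x \<in> U" for x c
    proof -
      obtain a where ab: "a \<in> F1" "x = rs a" using xU U_def by auto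
      have "(\<lambda>i. c * x i) = rs (\<lambda>i. c * a i)" using ab by (simp add: rs_def fun_eq_iff)
      then show ?thesis using subsp_scale[OF sF1 ab(1)] U_def by auto
    qed
    ultimately show ?thesis by (simp add: subsp_def)
  qed
  have UA: "U \<subseteq> lab A" by (auto simp: U_def rs_def lab_def)
  have wA: "rs f0 \<in> lab A" by (simp add: rs_def lab_def)
  have wU: "rs f0 \<notin> U"
  proof
    assume "rs f0 \<in> U"
    then obtain p where p: "p \<in> F1" "rs f0 = rs p" using U_def by auto
    have "f0 i = p i" if "i < n" "i \<notin> J" for i
      using fun_cong[OF p(2), of i] that by (simp add: rs_def A_def)
    then show False using ne p(1) by blast
  qed
  obtain y where y: "y \<in> lab A" "\<forall>u\<in>U. (\<Sum>i\<in>A. y i * u i) = 0" "(\<Sum>i\<in>A. y i * rs f0 i) \<noteq> 0"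
    using separate_aux[of A U "rs f0"] sU UA wA wU by (auto simp: A_def)
  have key: "(\<Sum>i<n. x i * y i) = (\<Sum>i\<in>A. y i * rs x i)" for x
  proof -
    have "(\<Sum>i<n. x i * y i) = (\<Sum>i\<in>A. x i * y i)"
      using y(1) by (intro sum.mono_neutral_right) (auto simp: A_def lab_def)
    also have "\<dots> = (\<Sum>i\<in>A. y i * rs x i)" by (intro sum.cong refl) (simp add: rs_def)
    finally show ?thesis .
  qed
  have yV: "y \<in> Vn n" using y(1) by (rule lab_mono) (auto simp: A_def)
  have "y \<in> dual n F1" using yV key y(2) U_def by (auto simp: dual_def)
  moreover have "y \<notin> dual n F0" using key y(3) f0 by (auto simp: dual_def)
  moreover have "\<forall>i\<in>J. y i = 0" using y(1) by (auto simp: lab_def A_def)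
  ultimately have "Bad2 J" unfolding Bad2_def by blast
  then show False using nb by simp
qed

lemma rowspace_diff: "a \<in> rowspace GE e \<Longrightarrow> b \<in> rowspace GE e \<Longrightarrow> a - b \<in> rowspace GE e"
  by (auto simp: rowspace_def comb_diff[symmetric])

lemma good:
  assumes J: "J \<subseteq> {0..<n}" and nb1: "\<not> Bad1 J" and nb2: "\<not> Bad2 J"
  shows "gauth (n + e) J k (enc_amp n e k f1 G01 G1 GE)"
proof -
  have ex: "\<exists>p. p \<in> F1 \<and> (\<forall>i<n. i \<notin> J \<longrightarrow> g s i = p i)" if "s \<in> Vn k" for s
    using restr_ok[OF J nb2 g_F0[OF that]] by blast
  define pt where "pt s = (SOME p. p \<in> F1 \<and> (\<forall>i<n. i \<notin> J \<longrightarrow> g s i = p i))" for s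
  have pt: "pt s \<in> F1 \<and> (\<forall>i<n. i \<notin> J \<longrightarrow> g s i = pt s i)" if "s \<in> Vn k" for s
    unfolding pt_def by (rule someI_ex[OF ex[OF that]])
  define w where "w s = g s - pt s" for s
  have wJ: "w s \<in> lab J" if s: "s \<in> Vn k" for s
  proof -
    have "w s i = 0" if "i \<notin> J" for i
    proof (cases "i < n")
      case True then show ?thesis using pt[OF s] that by (simp add: w_def)
    next
      case False
      have "g s i = 0" using g_Vn False by (simp add: lab_def)
      moreover have "pt s i = 0" using pt[OF s] F1Vn False by (auto simp: lab_def)
      ultimately show ?thesis by (simp add: w_def)
    qed
    then show ?thesis by (simp add: lab_def)
  qed
  have wV: "w s \<in> Vn n" if "s \<in> Vn k" for s
    using pt[OF that] F1Vn g_Vn by (auto simp: w_def intro: lab_diff)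
  define C1 where "C1 = {ext_vec n (p + E r) r | p r. p \<in> F1 \<and> r \<in> Vn e}"
  define rJ where "rJ q = (\<lambda>i. if i \<in> J then q i else (0::'a))" for q :: "nat \<Rightarrow> 'a"
  define rB where "rB q = (\<lambda>i. if i \<in> J then (0::'a) else q i)" for q :: "nat \<Rightarrow> 'a"
  have rJB: "rJ q + rB q = q" for q by (simp add: rJ_def rB_def fun_eq_iff)
  define Om where "Om = (\<lambda>q. (rJ q, rB q)) ` C1"
  have J': "J \<subseteq> {0..<n + e}" using J by auto
  have Om_sub: "Om \<subseteq> lab J \<times> lab ({0..<n + e} - J)"
  proof
    fix mb assume "mb \<in> Om"
    then obtain p r where pr: "p \<in> F1" "r \<in> Vn e" "mb = (rJ (ext_vec n (p + E r) r), rB (ext_vec n (p + E r) r))"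
      unfolding Om_def C1_def by blast
    have "rB (ext_vec n (p + E r) r) i = 0" if "i \<notin> {0..<n + e} - J" for i
      using that pr(2) by (auto simp: rB_def ext_vec_def lab_def)
    then show "mb \<in> lab J \<times> lab ({0..<n + e} - J)" using pr(3) by (simp add: lab_def rJ_def)
  qed
  have inj: "t = t'"
    if tt: "t \<in> Vn k" "t' \<in> Vn k" "(m, b) \<in> Om" "(m', b') \<in> Om" "w t + m = w t' + m'" for t t' m b m' b'
  proof -
    obtain p r where pr: "p \<in> F1" "r \<in> Vn e" "m = rJ (ext_vec n (p + E r) r)"
      using tt(3) unfolding Om_def C1_def by blast
    obtain p' r' where pr': "p' \<in> F1" "r' \<in> Vn e" "m' = rJ (ext_vec n (p' + E r') r')"
      using tt(4) unfolding Om_def C1_def by blast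
    define P where "P = (p - pt t) - (p' - pt t')"
    have PF: "P \<in> F1" unfolding P_def
      by (intro subsp_diff[OF sF1] pr(1) pr'(1) pt[OF tt(1), THEN conjunct1] pt[OF tt(2), THEN conjunct1])
    define z where "z = (g (t - t') + P) + E (r - r')"
    have zJ: "\<forall>i\<in>J. z i = 0"
    proof
      fix i assume i: "i \<in> J"
      then have "i < n" using J by auto
      have "w t i + m i = w t' i + m' i" using fun_cong[OF tt(5), of i] by simp
      then have "g t i - pt t i + (p i + E r i) = g t' i - pt t' i + (p' i + E r' i)"
        using pr(3) pr'(3) i \<open>i < n\<close> by (simp add: w_def rJ_def ext_vec_def)
      then show "z i = 0" by (simp add: z_def P_def comb_diff algebra_simps)
    qed
    have tV: "t - t' \<in> Vn k" by (rule lab_diff[OF tt(1,2)])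
    have gP: "g (t - t') + P \<in> F0" using F0_char tV PF by blast
    have "z \<in> code_sum F0 (rowspace GE e)"
      unfolding code_sum_def z_def vadd_eq using gP E_rs by blast
    then have "z \<in> code_sum F1 (rowspace GE e)" using nb1 zJ unfolding Bad1_def by blast
    then obtain p3 e3 where pe: "z = p3 + e3" "p3 \<in> F1" "e3 \<in> rowspace GE e"
      unfolding code_sum_def vadd_eq by blast
    have "g (t - t') + P - p3 = e3 - E (r - r')" using pe(1) by (simp add: z_def algebra_simps)
    moreover have "g (t - t') + P - p3 \<in> F0"
      using sub pe(2) gP by (intro subsp_diff[OF sF0]) auto
    moreover have "e3 - E (r - r') \<in> rowspace GE e" by (intro rowspace_diff pe(3) E_rs)
    ultimately have "g (t - t') + P - p3 = 0" using cap' by metis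
    then have "g (t - t') = p3 - P" by (simp add: algebra_simps)
    moreover have "p3 - P \<in> F1" by (rule subsp_diff[OF sF1 pe(2) PF])
    ultimately have "t - t' = 0" using g_in_F1[OF tV] by simp
    then show "t = t'" by simp
  qed
  have memS: "x \<in> S t \<longleftrightarrow> (\<exists>m b. (m, b) \<in> Om \<and> x = w t + m + b)" if t: "t \<in> Vn k" for t x
  proof
    assume "x \<in> S t"
    then obtain p r where pr: "p \<in> F1" "r \<in> Vn e" "x = ext_vec n (g t + p + E r) r"
      unfolding S_def by blast
    define q where "q = ext_vec n ((pt t + p) + E r) r"
    have "q \<in> C1" unfolding C1_def q_def
      using subsp_add[OF sF1 pt[OF t, THEN conjunct1] pr(1)] pr(2) by blast
    then have "(rJ q, rB q) \<in> Om" unfolding Om_def by blast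
    moreover have "x = w t + rJ q + rB q"
    proof -
      have "w t + rJ q + rB q = w t + q" using rJB[of q] by (simp add: add.assoc)
      also have "\<dots> = ext_vec n (w t) 0 + q" using ext_of_Vn[OF wV[OF t]] by simp
      also have "\<dots> = ext_vec n (w t + ((pt t + p) + E r)) (0 + r)" by (simp only: q_def ext_add)
      also have "\<dots> = ext_vec n (g t + p + E r) r" by (simp add: w_def add.assoc)
      finally show ?thesis using pr(3) by simp
    qed
    ultimately show "\<exists>m b. (m, b) \<in> Om \<and> x = w t + m + b" by blast
  next
    assume "\<exists>m b. (m, b) \<in> Om \<and> x = w t + m + b"
    then obtain q where q: "q \<in> C1" "x = w t + rJ q + rB q" unfolding Om_def by blast
    then obtain p r where pr: "p \<in> F1" "r \<in> Vn e" "q = ext_vec n (p + E r) r"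
      unfolding C1_def by blast
    have "x = w t + q" using q(2) rJB[of q] by (simp add: add.assoc)
    also have "\<dots> = ext_vec n (w t) 0 + q" using ext_of_Vn[OF wV[OF t]] by simp
    also have "\<dots> = ext_vec n (w t + (p + E r)) (0 + r)" by (simp only: pr(3) ext_add)
    also have "\<dots> = ext_vec n (g t + (p - pt t) + E r) r" by (simp add: w_def algebra_simps)
    finally have "x = ext_vec n (g t + (p - pt t) + E r) r" .
    moreover have "p - pt t \<in> F1" by (rule subsp_diff[OF sF1 pr(1) pt[OF t, THEN conjunct1]])
    ultimately show "x \<in> S t" unfolding S_def using pr(2) by blast
  qed
  have amp: "enc_amp n e k f1 G01 G1 GE t x = (if \<exists>m b. (m, b) \<in> Om \<and> x = w t + m + b then cc else 0)"
    if t: "t \<in> Vn k" for t x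
    using amp_formula[OF t, of x] memS[OF t, of x] by simp
  have cardOm: "card Om = card (UNIV::'a set) ^ (f1 + e)"
  proof -
    have "inj_on (\<lambda>q. (rJ q, rB q)) C1"
    proof (rule inj_onI)
      fix q q' assume "(rJ q, rB q) = (rJ q', rB q')"
      then have "rJ q = rJ q'" "rB q = rB q'" by simp_all
      then show "q = q'" by (metis rJB)
    qed
    then have cOm: "card Om = card C1" unfolding Om_def by (rule card_image)
    define f where "f pr = ext_vec n (fst pr + E (snd pr)) (snd pr)" for pr :: "(nat \<Rightarrow> 'a) \<times> (nat \<Rightarrow> 'a)"
    have "C1 = f ` (F1 \<times> Vn e)"
    proof (rule set_eqI)
      fix q
      show "q \<in> C1 \<longleftrightarrow> q \<in> f ` (F1 \<times> Vn e)"
      proof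
        assume "q \<in> C1"
        then obtain p r where "p \<in> F1" "r \<in> Vn e" "q = ext_vec n (p + E r) r" unfolding C1_def by blast
        then have "(p, r) \<in> F1 \<times> Vn e" "q = f (p, r)" by (simp_all add: f_def)
        then show "q \<in> f ` (F1 \<times> Vn e)" by (rule rev_image_eqI)
      next
        assume "q \<in> f ` (F1 \<times> Vn e)"
        then obtain pr where "pr \<in> F1 \<times> Vn e" "q = f pr" by blast
        then show "q \<in> C1" unfolding C1_def f_def by (auto simp: mem_Times_iff)
      qed
    qed
    moreover have "inj_on f (F1 \<times> Vn e)"
    proof (rule inj_onI)
      fix x y assume h: "x \<in> F1 \<times> Vn e" "y \<in> F1 \<times> Vn e" "f x = f y"
      have "fst x \<in> F1" "fst y \<in> F1" using h(1,2) by (auto simp: mem_Times_iff)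
      then have "fst x \<in> Vn n" "fst y \<in> Vn n" using F1Vn by auto
      then have "fst x + E (snd x) \<in> Vn n" "fst y + E (snd y) \<in> Vn n"
        by (auto intro: lab_add E_Vn)
      then have "fst x + E (snd x) = fst y + E (snd y)" "snd x = snd y"
        using ext_inj[OF h(3)[unfolded f_def]] by blast+
      then show "x = y" by (simp add: prod_eq_iff)
    qed
    ultimately have "card Om = card (F1 \<times> (Vn e :: (nat \<Rightarrow> 'a) set))" using cOm by (simp add: card_image)
    also have "\<dots> = card F1 * card (Vn e :: (nat \<Rightarrow> 'a) set)" by (rule card_cartesian_product)
    also have "card F1 = card (Vn f1 :: (nat \<Rightarrow> 'a) set)" using F1_img F1_inj by (simp add: card_image)
    finally show ?thesis by (simp add: card_Vn power_add)
  qed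
  have norm: "cc * cnj cc * of_nat (card Om) = 1"
  proof -
    define Q where "Q = real (card (UNIV::'a set) ^ (f1 + e))"
    have Qp: "Q > 0" unfolding Q_def by (simp add: finite_UNIV_card_ge_0)
    have sq: "sqrt Q * sqrt Q = Q" using Qp by simp
    have "cc * cnj cc = 1 / (complex_of_real (sqrt Q) * complex_of_real (sqrt Q))"
      by (simp add: cc_def Q_def)
    also have "\<dots> = 1 / complex_of_real Q" by (simp only: of_real_mult[symmetric] sq)
    finally have c2: "cc * cnj cc = 1 / complex_of_real Q" .
    have "of_nat (card Om) = complex_of_real Q" unfolding cardOm Q_def by simp
    then show ?thesis using c2 Qp by simp
  qed
  show ?thesis
    by (rule rec[where amp = "enc_amp n e k f1 G01 G1 GE", OF J' wJ Om_sub inj amp norm])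
qed


lemma char:
  assumes "J \<subseteq> {0..<n}"
  shows "authorized n e k f1 G01 G1 GE J \<longleftrightarrow> \<not> Bad1 J \<and> \<not> Bad2 J"
  using authorized_gauth bad1_fail[OF assms] bad2_fail[OF assms] good[OF assms] by blast

lemma rowspace_Vn_n: "rowspace GE e \<subseteq> Vn n"
  using E_Vn by (auto simp: rowspace_def)

lemma code_sum_Vn: "L \<subseteq> Vn n \<Longrightarrow> code_sum L (rowspace GE e) \<subseteq> Vn n"
  using rowspace_Vn_n by (auto simp: code_sum_def vadd_eq intro: lab_add)

lemma nonempty1: "code_sum F0 (rowspace GE e) - code_sum F1 (rowspace GE e) \<noteq> {}"
proof -
  obtain f where f: "f \<in> F0" "f \<notin> F1" using sub by blast
  have "f = vadd f 0" by (simp add: vadd_eq)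
  moreover have "(0::nat \<Rightarrow> 'a) \<in> rowspace GE e" using E_rs[of 0] by (simp add: comb_zero)
  ultimately have "f \<in> code_sum F0 (rowspace GE e)" using f(1) unfolding code_sum_def by blast
  moreover have "f \<notin> code_sum F1 (rowspace GE e)"
  proof
    assume "f \<in> code_sum F1 (rowspace GE e)"
    then obtain p e0 where pe: "f = p + e0" "p \<in> F1" "e0 \<in> rowspace GE e" unfolding code_sum_def vadd_eq by blast
    have "f - p \<in> F0" using sub pe(2) f(1) by (intro subsp_diff[OF sF0]) auto
    moreover have "f - p = e0" using pe(1) by simp
    ultimately have "f - p = 0" using cap' pe(3) by metis
    then show False using f(2) pe(2) by simp
  qed
  ultimately show ?thesis by blast
qed

lemma nonempty2: "dual n F1 - dual n F0 \<noteq> {}"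
proof -
  obtain f where f: "f \<in> F0" "f \<notin> F1" using sub by blast
  have fV: "f \<in> lab {0..<n}" using f(1) F0Vn by auto
  obtain y where y: "y \<in> lab {0..<n}" "\<forall>u\<in>F1. (\<Sum>i\<in>{0..<n}. y i * u i) = 0" "(\<Sum>i\<in>{0..<n}. y i * f i) \<noteq> 0"
    using separate_aux[of "{0..<n}" F1 f] sF1 F1Vn fV f(2) by auto
  have "y \<in> dual n F1" using y(1,2) by (auto simp: dual_def atLeast0LessThan mult.commute)
  moreover have "y \<notin> dual n F0" using y(3) f(1) by (auto simp: dual_def atLeast0LessThan mult.commute)
  ultimately show ?thesis by blast
qed

lemma wt_le:
  assumes J: "J \<subseteq> {0..<n}" and z: "\<forall>i\<in>J. x i = 0"
  shows "wt n x \<le> n - card J"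
proof -
  have "{i. i < n \<and> x i \<noteq> 0} \<subseteq> {0..<n} - J" using z by auto
  then have "wt n x \<le> card ({0..<n} - J)" unfolding wt_def by (intro card_mono) auto
  also have "\<dots> = n - card J" using J by (simp add: card_Diff_subset finite_subset)
  finally show ?thesis .
qed

lemma main:
  "(\<forall>J. J \<subseteq> {0..<n} \<and> card J = \<tau> \<longrightarrow> authorized n e k f1 G01 G1 GE J)
     \<longleftrightarrow> \<tau> \<ge> n - min (wt_diff n (code_sum F0 (rowspace GE e)) (code_sum F1 (rowspace GE e)))
                        (wt_diff n (dual n F1) (dual n F0)) + 1"
proof -
  define X1 where "X1 = code_sum F0 (rowspace GE e) - code_sum F1 (rowspace GE e)"
  define X2 where "X2 = dual n F1 - dual n F0"
  define W1 where "W1 = wt_diff n (code_sum F0 (rowspace GE e)) (code_sum F1 (rowspace GE e))"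
  define W2 where "W2 = wt_diff n (dual n F1) (dual n F0)"
  have fVn: "finite (Vn n :: (nat \<Rightarrow> 'a) set)" by (rule finite_Vn)
  have X1V: "X1 \<subseteq> Vn n" using code_sum_Vn[OF F0Vn] X1_def by auto
  have X2V: "X2 \<subseteq> Vn n" by (auto simp: X2_def dual_def)
  have fX1: "finite (wt n ` X1)" using finite_subset[OF X1V fVn] by simp
  have fX2: "finite (wt n ` X2)" using finite_subset[OF X2V fVn] by simp
  have W1: "W1 = Min (wt n ` X1)" by (simp add: W1_def X1_def wt_diff_def)
  have W2: "W2 = Min (wt n ` X2)" by (simp add: W2_def X2_def wt_diff_def)
  have le1: "x \<in> X1 \<Longrightarrow> W1 \<le> wt n x" for x using W1 fX1 by simp
  have le2: "x \<in> X2 \<Longrightarrow> W2 \<le> wt n x" for x using W2 fX2 by simp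
  have in1: "W1 \<in> wt n ` X1" using W1 fX1 nonempty1 X1_def by simp
  have in2: "W2 \<in> wt n ` X2" using W2 fX2 nonempty2 X2_def by simp
  have B1: "Bad1 J \<longleftrightarrow> (\<exists>x\<in>X1. \<forall>i\<in>J. x i = 0)" for J by (simp add: Bad1_def X1_def)
  have B2: "Bad2 J \<longleftrightarrow> (\<exists>x\<in>X2. \<forall>i\<in>J. x i = 0)" for J by (simp add: Bad2_def X2_def)
  obtain v where v: "v \<in> X1 \<or> v \<in> X2" "wt n v = min W1 W2"
  proof (cases "W1 \<le> W2")
    case True then show ?thesis using in1 that by (auto simp: min_def)
  next
    case False then show ?thesis using in2 that by (auto simp: min_def)
  qed
  show ?thesis unfolding W1_def[symmetric] W2_def[symmetric]
  proof
    assume H: "\<forall>J. J \<subseteq> {0..<n} \<and> card J = \<tau> \<longrightarrow> authorized n e k f1 G01 G1 GE J"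
    show "\<tau> \<ge> n - min W1 W2 + 1"
    proof (rule ccontr)
      assume "\<not> \<tau> \<ge> n - min W1 W2 + 1"
      then have tl: "\<tau> \<le> n - min W1 W2" by simp
      define Supp where "Supp = {i. i < n \<and> v i \<noteq> 0}"
      have cs: "card Supp = min W1 W2" using v(2) by (simp add: Supp_def wt_def)
      have "Supp \<subseteq> {0..<n}" by (auto simp: Supp_def)
      then have "card ({0..<n} - Supp) = n - min W1 W2" using cs by (simp add: card_Diff_subset finite_subset)
      then obtain J where Jh: "J \<subseteq> {0..<n} - Supp" "card J = \<tau>"
        using obtain_subset_with_card_n[of \<tau> "{0..<n} - Supp"] tl by metis
      have J: "J \<subseteq> {0..<n}" using Jh by auto
      have "\<forall>i\<in>J. v i = 0" using Jh(1) by (auto simp: Supp_def)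
      then have "Bad1 J \<or> Bad2 J" using v(1) B1 B2 by blast
      then have "\<not> authorized n e k f1 G01 G1 GE J" using char[OF J] by blast
      then show False using H J Jh(2) by blast
    qed
  next
    assume T: "\<tau> \<ge> n - min W1 W2 + 1"
    show "\<forall>J. J \<subseteq> {0..<n} \<and> card J = \<tau> \<longrightarrow> authorized n e k f1 G01 G1 GE J"
    proof (intro allI impI)
      fix J assume J: "J \<subseteq> {0..<n} \<and> card J = \<tau>"
      have tn: "\<tau> \<le> n" using J card_mono[of "{0..<n}" J] by auto
      have nb: "\<not> (\<exists>x\<in>X. \<forall>i\<in>J. x i = 0)" if WX: "\<And>x. x \<in> X \<Longrightarrow> min W1 W2 \<le> wt n x" for X
      proof
        assume "\<exists>x\<in>X. \<forall>i\<in>J. x i = 0"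
        then obtain x where x: "x \<in> X" "\<forall>i\<in>J. x i = 0" by blast
        have "wt n x \<le> n - \<tau>" using wt_le[of J x] J x(2) by simp
        then have "min W1 W2 \<le> n - \<tau>" using WX[OF x(1)] by simp
        then show False using T tn by linarith
      qed
      have "\<not> Bad1 J" unfolding B1 by (rule nb) (use le1 in force)
      moreover have "\<not> Bad2 J" unfolding B2 by (rule nb) (use le2 in force)
      ultimately show "authorized n e k f1 G01 G1 GE J" using char J by blast
    qed
  qed
qed

end

theorem corollary2:
  fixes n e k f1 :: nat
    and F0 F1 :: "(nat \<Rightarrow> 'a::{field,finite}) set"
    and G01 G1 GE :: "nat \<Rightarrow> nat \<Rightarrow> 'a"
  assumes "linear_code n F0" and "linear_code n F1" and "F1 \<subset> F0"
    and "generator_matrix G1 f1 n F1"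
    and "generator_matrix (stack G01 k G1) (k + f1) n F0"
    and "is_matrix GE e n"
    and "F0 \<inter> rowspace GE e = {zerov}"
  shows "(\<forall>J. J \<subseteq> {0..<n} \<and> card J = \<tau> \<longrightarrow> authorized n e k f1 G01 G1 GE J)
     \<longleftrightarrow> \<tau> \<ge> n - min (wt_diff n (code_sum F0 (rowspace GE e)) (code_sum F1 (rowspace GE e)))
                        (wt_diff n (dual n F1) (dual n F0)) + 1"
proof -
  interpret ecss n e k f1 F0 F1 G01 G1 GE
    using assms by unfold_locales
  show ?thesis by (rule main)
qed


end
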